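(* Let $m>1$, $D>0$, $r>0$, and let $b,d$ satisfy the standing assumptions below. For $c>0$ let $\phi_c$ be the function obtained by the delayed step-by-step construction described below. Then there exists a constant $\underline c>0$ such that for every $c\in(0,\underline c]$, $\phi_c$ decays to zero in finite time, i.e., there is $T\in(0,\infty)$ with $\phi_c>0$ on $(0,T)$ and $\phi_c(T)=0$.
   Context: Standing assumptions: $d\in C^2([0,+\infty))$ with $d(0)=0$, $d'(s)>0$, $d''(s)\ge0$ for $s>0$; $b\in C^1([0,+\infty);[0,+\infty))$ has exactly one positive local extremum point $s_M$ (its global maximum point), $b(0)=0$, there is $\kappa>0$ with $b(\kappa)=d(\kappa)$, $b'(0)>d'(0)$, $b'(\kappa)<d'(\kappa)$, $d(s)<b(s)\le b'(0)s$ for $s\in(0,\kappa)$, and $s_M<\kappa$. Construction of $\phi_c$: set $\phi_c(t)=0$ for $t\le0$. On $[0,cr)$ let $\phi_c=\phi_c^1$ be the maximal solution of $c\phi'=D(\phi^m)''-d(\phi)$ on $(0,cr)$ with $\phi(0)=0$, $(\phi^m)'(0)=0$, which is positive on $(0,cr)$. Inductively, for $k\ge2$, on $[(k-1)cr,kcr)$ let $\phi_c=\phi_c^k$ solve the initial value problem $$c\phi'(t)=D(\phi^m(t))''-d(\phi(t))+b(\phi_c^{k-1}(t-cr)),\qquad \phi((k-1)cr)=\phi_c^{k-1}((k-1)cr),\ \phi'((k-1)cr)=(\phi_c^{k-1})'((k-1)cr).$$ The construction is continued step by step as long as $\phi_c$ stays positive and finite; it stops if $\phi_c$ blows up or decays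 to zero in finite time; otherwise $\phi_c$ is defined on all of $(0,+\infty)$. *)

theory Defs
  imports "HOL-Analysis.Analysis"
begin

definition local_extremum_at :: "(real \<Rightarrow> real) \<Rightarrow> real \<Rightarrow> bool" where
  "local_extremum_at f s \<longleftrightarrow>
     (\<exists>e>0. (\<forall>y. 0 < y \<and> \<bar>y - s\<bar> < e \<longrightarrow> f y \<le> f s)
          \<or> (\<forall>y. 0 < y \<and> \<bar>y - s\<bar> < e \<longrightarrow> f s \<le> f y))"

text \<open>phi solves the delayed degenerate equation
  c phi' = D (phi^m)'' - d(phi) + b(phi(t - c r)) on (0,L), with phi = 0 on (-inf,0],
  phi > 0 on (0,L), phi^m in C^1 on (-inf,L) (so phi(0)=0 and (phi^m)'(0)=0).
  Since b(0)=0 and phi = 0 on (-inf,0], on (0,cr) this is the first-step equation; gluing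
  of phi and phi' at the points k c r is encoded by the global regularity.\<close>
definition wave_sol ::
  "real \<Rightarrow> real \<Rightarrow> real \<Rightarrow> (real \<Rightarrow> real) \<Rightarrow> (real \<Rightarrow> real) \<Rightarrow> real \<Rightarrow> (real \<Rightarrow> real) \<Rightarrow> ereal \<Rightarrow> bool"
  where
  "wave_sol m D r b d c \<phi> L \<longleftrightarrow>
     0 < L \<and>
     (\<forall>t\<le>0. \<phi> t = 0) \<and>
     (\<forall>t. 0 < t \<and> ereal t < L \<longrightarrow> 0 < \<phi> t) \<and>
     continuous_on {t. ereal t < L} \<phi> \<and>
     (\<forall>t. ereal t < L \<longrightarrow> (\<lambda>s. \<phi> s powr m) differentiable (at t)) \<and>
     continuous_on {t. ereal t < L} (deriv (\<lambda>s. \<phi> s powr m)) \<and>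
     deriv (\<lambda>s. \<phi> s powr m) 0 = 0 \<and>
     (\<forall>t. 0 < t \<and> ereal t < L \<longrightarrow>
        \<phi> differentiable (at t) \<and>
        deriv (\<lambda>s. \<phi> s powr m) differentiable (at t) \<and>
        c * deriv \<phi> t = D * deriv (deriv (\<lambda>s. \<phi> s powr m)) t - d (\<phi> t) + b (\<phi> (t - c * r)))"

text \<open>phi_c on its maximal interval (0,L) of positive existence: a solution that admits no
  proper extension.\<close>
definition wave_profile ::
  "real \<Rightarrow> real \<Rightarrow> real \<Rightarrow> (real \<Rightarrow> real) \<Rightarrow> (real \<Rightarrow> real) \<Rightarrow> real \<Rightarrow> (real \<Rightarrow> real) \<Rightarrow> ereal \<Rightarrow> bool"
  where
  "wave_profile m D r b d c \<phi> L \<longleftrightarrow>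
     wave_sol m D r b d c \<phi> L \<and>
     (\<forall>\<psi> L'. wave_sol m D r b d c \<psi> L' \<and> L \<le> L' \<and> (\<forall>t. ereal t < L \<longrightarrow> \<psi> t = \<phi> t)
        \<longrightarrow> L' = L)"

end

theory Submission
  imports Defs
begin


lemma open_ereal_less: "open {t::real. ereal t < L}"
  by (rule open_Collect_less) (auto intro: continuous_on_ereal continuous_on_id continuous_on_const)

lemma ereal_between: assumes "ereal t < L" shows "\<exists>T. t < T \<and> ereal T < L"
proof -
  obtain z where "ereal t < ereal z" "ereal z < L" using ereal_dense2[OF assms] by blast
  then show ?thesis by auto
qed

lemma int_deriv_zero_left:
  fixes k :: "real \<Rightarrow> real" and L :: ereal
  assumes cont: "continuous_on {t. ereal t < L} k" and z: "\<And>s. s \<le> 0 \<Longrightarrow> k s = 0"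
    and t: "ereal t < L"
  shows "((\<lambda>x. integral {0..x} k) has_real_derivative k t) (at t)"
proof -
  obtain T where T: "t < T" "ereal T < L" using ereal_between[OF t] by blast
  define a where "a = min (t - 1) (-1)"
  have a: "a < t" "a < 0" unfolding a_def by auto
  have sub: "{a..T} \<subseteq> {t. ereal t < L}" using T by (auto intro: le_less_trans[of _ "ereal T"])
  have ck: "continuous_on {a..T} k" using continuous_on_subset[OF cont sub] .
  have eq: "integral {a..x} k = integral {0..x} k" if "x \<in> {a<..<T}" for x
  proof (cases "x < 0")
    case True
    have "integral {a..x} k = integral {a..x} (\<lambda>_. 0)"
      by (rule integral_cong) (use True z in auto)
    then show ?thesis using True by simp
  next
    case False
    have i1: "k integrable_on {a..x}" using ck a that False
      by (intro integrable_continuous_interval continuous_on_subset[OF ck]) auto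
    have "integral {a..x} k = integral {a..0} k + integral {0..x} k"
      using Henstock_Kurzweil_Integration.integral_combine[OF _ _ i1, of 0] a False by simp
    moreover have "integral {a..0} k = integral {a..0} (\<lambda>_. 0)"
      by (rule integral_cong) (use z in auto)
    ultimately show ?thesis by simp
  qed
  have "((\<lambda>x. integral {a..x} k) has_real_derivative k t) (at t within {a..T})"
    by (rule integral_has_real_derivative[OF ck]) (use a T in auto)
  then have "((\<lambda>x. integral {a..x} k) has_real_derivative k t) (at t)"
    using at_within_interior[of t "{a..T}"] a T by auto
  then show ?thesis
    by (rule has_field_derivative_transform_within_open[of _ _ _ "{a<..<T}"]) (use a T eq in auto)
qed

lemma kcont:
  fixes \<psi> b d :: "real \<Rightarrow> real" and L :: ereal
  assumes bc: "continuous_on {0..} b" and dc: "continuous_on {0..} d"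
    and cr: "c * r \<ge> 0"
    and nn: "\<forall>t. ereal t < L \<longrightarrow> \<psi> t \<ge> 0"
    and cont: "continuous_on {t. ereal t < L} \<psi>"
  shows "continuous_on {t. ereal t < L} (\<lambda>s. d (\<psi> s) - b (\<psi> (s - c*r)))"
proof -
  have 1: "continuous_on {t. ereal t < L} (\<lambda>s. d (\<psi> s))"
    by (rule continuous_on_compose2[OF dc cont]) (use nn in auto)
  have sub: "(\<lambda>s. s - c*r) ` {t. ereal t < L} \<subseteq> {t. ereal t < L}"
  proof clarify
    fix s assume "ereal s < L"
    moreover have "ereal (s - c*r) \<le> ereal s" using cr by simp
    ultimately show "ereal (s - c*r) < L" by (rule le_less_trans[rotated])
  qed
  have 2: "continuous_on {t. ereal t < L} (\<lambda>s. \<psi> (s - c*r))"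
    by (rule continuous_on_compose2[OF cont]) (auto intro!: continuous_intros simp: sub)
  have 3: "continuous_on {t. ereal t < L} (\<lambda>s. b (\<psi> (s - c*r)))"
    by (rule continuous_on_compose2[OF bc 2]) (use nn sub in auto)
  show ?thesis using continuous_on_diff[OF 1 3] .
qed

lemma wave_sol_intro:
  fixes \<psi> W :: "real \<Rightarrow> real" and L :: ereal
  assumes L: "0 < L" and m: "m > 1" and D: "D > 0" and c: "c > 0" and r: "r > 0"
    and bc: "continuous_on {0..} b" and dc: "continuous_on {0..} d" and b0: "b 0 = 0" and d0: "d 0 = 0"
    and z: "\<forall>t\<le>0. \<psi> t = 0"
    and pos: "\<forall>t. 0 < t \<and> ereal t < L \<longrightarrow> 0 < \<psi> t"
    and cont: "continuous_on {t. ereal t < L} \<psi>"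
    and Wdef: "\<And>t. W t = (c * \<psi> t + integral {0..t} (\<lambda>s. d (\<psi> s) - b (\<psi> (s - c*r)))) / D"
    and der: "\<And>t. ereal t < L \<Longrightarrow> ((\<lambda>s. \<psi> s powr m) has_real_derivative W t) (at t)"
  shows "wave_sol m D r b d c \<psi> L"
proof -
  define k where "k = (\<lambda>s. d (\<psi> s) - b (\<psi> (s - c*r)))"
  have nn: "\<forall>t. ereal t < L \<longrightarrow> \<psi> t \<ge> 0"
    using z pos by (metis less_le_not_le nle_le)
  have kc: "continuous_on {t. ereal t < L} k"
    unfolding k_def by (rule kcont[OF bc dc _ nn cont]) (use c r in simp)
  have kz: "k s = 0" if "s \<le> 0" for s
  proof -
    have "s - c*r \<le> 0" using that mult_pos_pos[OF c r] by linarith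
    then show ?thesis using that z b0 d0 unfolding k_def by simp
  qed
  have Fd: "((\<lambda>x. integral {0..x} k) has_real_derivative k t) (at t)" if "ereal t < L" for t
    by (rule int_deriv_zero_left[OF kc kz that])
  have Fc: "continuous_on {t. ereal t < L} (\<lambda>x. integral {0..x} k)"
    using Fd by (meson DERIV_continuous continuous_at_imp_continuous_on mem_Collect_eq)
  have Wc: "continuous_on {t. ereal t < L} W"
    unfolding Wdef k_def[symmetric] using cont Fc D by (intro continuous_intros) auto
  have dU: "deriv (\<lambda>s. \<psi> s powr m) t = W t" if "ereal t < L" for t
    using der[OF that] by (rule DERIV_imp_deriv)
  have W0: "W 0 = 0" using Wdef[of 0] z by simp
  have main: "\<psi> differentiable (at t) \<and>
        deriv (\<lambda>s. \<psi> s powr m) differentiable (at t) \<and>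
        c * deriv \<psi> t = D * deriv (deriv (\<lambda>s. \<psi> s powr m)) t - d (\<psi> t) + b (\<psi> (t - c * r))"
    if t: "0 < t" "ereal t < L" for t
  proof -
    have pt: "\<psi> t > 0" using pos t by auto
    have Ut: "\<psi> t powr m > 0" using pt by simp
    have dpsi0: "((\<lambda>s. (\<psi> s powr m) powr (1/m)) has_real_derivative
        (1/m) * (\<psi> t powr m) powr (1/m - 1) * W t) (at t)"
      using DERIV_fun_powr[OF der[OF t(2)] Ut, of "1/m"] by simp
    have eqpsi: "(\<psi> s powr m) powr (1/m) = \<psi> s" if "s \<in> {t. ereal t < L}" for s
    proof -
      have "\<psi> s \<ge> 0" using nn that by auto
      then show ?thesis using m by (simp add: powr_powr)
    qed
    define p' where "p' = (1/m) * (\<psi> t powr m) powr (1/m - 1) * W t"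
    have dpsi: "(\<psi> has_real_derivative p') (at t)"
      unfolding p'_def
      by (rule has_field_derivative_transform_within_open[OF dpsi0 open_ereal_less]) (use t eqpsi in auto)
    have dW0: "((\<lambda>x. (c * \<psi> x + integral {0..x} k) / D) has_real_derivative (c * p' + k t) / D) (at t)"
      using D dpsi Fd[OF t(2)] by (intro derivative_eq_intros refl) (auto simp: field_simps)
    have dW: "(deriv (\<lambda>s. \<psi> s powr m) has_real_derivative (c * p' + k t) / D) (at t)"
      by (rule has_field_derivative_transform_within_open[OF dW0 open_ereal_less])
         (use t dU Wdef k_def in auto)
    have "deriv \<psi> t = p'" using dpsi by (rule DERIV_imp_deriv)
    moreover have "deriv (deriv (\<lambda>s. \<psi> s powr m)) t = (c * p' + k t) / D" using dW by (rule DERIV_imp_deriv)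
    ultimately show ?thesis using dpsi dW D unfolding k_def
      by (auto simp: real_differentiable_def field_simps)
  qed
  show ?thesis unfolding wave_sol_def
  proof (intro conjI allI impI)
    show "0 < L" by fact
    show "\<psi> t = 0" if "t \<le> 0" for t using z that by auto
    show "0 < \<psi> t" if "0 < t \<and> ereal t < L" for t using pos that by auto
    show "continuous_on {t. ereal t < L} \<psi>" by fact
    show "(\<lambda>s. \<psi> s powr m) differentiable at t" if "ereal t < L" for t
      using der[OF that] by (auto simp: real_differentiable_def)
    show "continuous_on {t. ereal t < L} (deriv (\<lambda>s. \<psi> s powr m))"
      by (rule continuous_on_eq[OF Wc]) (use dU in auto)
    show "deriv (\<lambda>s. \<psi> s powr m) 0 = 0" using dU[of 0] L W0 by (simp add: zero_ereal_def)
  qed (use main in auto)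
qed

lemma wave_sol_basic:
  fixes \<phi> b d :: "real \<Rightarrow> real" and L :: ereal
  assumes ws: "wave_sol m D r b d c \<phi> L"
  shows "0 < L" "\<And>t. t \<le> 0 \<Longrightarrow> \<phi> t = 0" "\<And>t. 0 < t \<Longrightarrow> ereal t < L \<Longrightarrow> 0 < \<phi> t"
    "\<And>t. ereal t < L \<Longrightarrow> 0 \<le> \<phi> t"
    "continuous_on {t. ereal t < L} \<phi>"
  using ws unfolding wave_sol_def by (auto simp: less_le_not_le) (metis less_le_not_le nle_le)

lemma wave_sol_identity:
  fixes \<phi> b d :: "real \<Rightarrow> real" and L :: ereal
  assumes ws: "wave_sol m D r b d c \<phi> L"
    and m: "m > 1" and D: "D > 0" and c: "c > 0" and r: "r > 0"
    and bc: "continuous_on {0..} b" and dc: "continuous_on {0..} d" and b0: "b 0 = 0" and d0: "d 0 = 0"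
    and t: "ereal t < L"
  shows "deriv (\<lambda>s. \<phi> s powr m) t = (c * \<phi> t + integral {0..t} (\<lambda>s. d (\<phi> s) - b (\<phi> (s - c*r)))) / D"
proof -
  note B = wave_sol_basic[OF ws]
  define k where "k = (\<lambda>s. d (\<phi> s) - b (\<phi> (s - c*r)))"
  define w where "w = deriv (\<lambda>s. \<phi> s powr m)"
  have kc: "continuous_on {t. ereal t < L} k"
    unfolding k_def by (rule kcont[OF bc dc _ _ B(5)]) (use c r B(4) in auto)
  have kz: "k s = 0" if "s \<le> 0" for s
  proof -
    have "s - c*r \<le> 0" using that mult_pos_pos[OF c r] by linarith
    then show ?thesis using that B(2) b0 d0 unfolding k_def by simp
  qed
  have Fd: "((\<lambda>x. integral {0..x} k) has_real_derivative k t) (at t)" if "ereal t < L" for t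
    by (rule int_deriv_zero_left[OF kc kz that])
  have Fc: "continuous_on {t. ereal t < L} (\<lambda>x. integral {0..x} k)"
    using Fd by (meson DERIV_continuous continuous_at_imp_continuous_on mem_Collect_eq)
  have wc: "continuous_on {t. ereal t < L} w" using ws unfolding wave_sol_def w_def by auto
  show ?thesis
  proof (cases "t \<le> 0")
    case True
    show ?thesis
    proof (cases "t = 0")
      case True
      then show ?thesis using ws B(2)[of 0] unfolding wave_sol_def by simp
    next
      case False
      with True have tn: "t < 0" by simp
      have "((\<lambda>s. \<phi> s powr m) has_real_derivative 0) (at t)"
        by (rule has_field_derivative_transform_within_open[of "\<lambda>_. 0" _ _ "{..<0}"])
           (use tn B(2) in auto)
      then have "w t = 0" unfolding w_def by (rule DERIV_imp_deriv)
      then show ?thesis using tn B(2)[of t] unfolding w_def k_def by simp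
    qed
  next
    case False
    then have tp: "t > 0" by simp
    define G where "G = (\<lambda>s. D * w s - c * \<phi> s - integral {0..s} k)"
    have sub: "{0..t} \<subseteq> {t. ereal t < L}" using t by (auto intro: le_less_trans[of _ "ereal t"])
    have Gc: "continuous_on {0..t} G" unfolding G_def
      by (intro continuous_intros continuous_on_subset[OF wc sub] continuous_on_subset[OF B(5) sub]
          continuous_on_subset[OF Fc sub])
    have "DERIV G s :> 0" if s: "0 < s" "s < t" for s
    proof -
      have sL: "ereal s < L" using s t by (auto intro: less_trans[of _ "ereal t"])
      have e: "\<phi> differentiable (at s) \<and> w differentiable (at s) \<and>
        c * deriv \<phi> s = D * deriv w s - d (\<phi> s) + b (\<phi> (s - c * r))"
        using ws s sL unfolding wave_sol_def w_def by auto
      have d1: "(\<phi> has_real_derivative deriv \<phi> s) (at s)" using e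
        by (simp add: DERIV_deriv_iff_real_differentiable)
      have d2: "(w has_real_derivative deriv w s) (at s)" using e
        by (simp add: DERIV_deriv_iff_real_differentiable)
      have "DERIV G s :> D * deriv w s - c * deriv \<phi> s - k s" unfolding G_def
        using d1 d2 Fd[OF sL] by (auto intro!: derivative_eq_intros)
      moreover have "D * deriv w s - c * deriv \<phi> s - k s = 0" using e unfolding k_def by simp
      ultimately show ?thesis by simp
    qed
    then have "G t = G 0" by (intro DERIV_isconst_end[OF tp Gc]) auto
    moreover have "G 0 = 0" unfolding G_def using ws B(2)[of 0] unfolding wave_sol_def w_def by simp
    ultimately show ?thesis using D unfolding G_def w_def k_def by (simp add: field_simps)
  qed
qed



lemma int_abs_bound:
  fixes f :: "real \<Rightarrow> real"
  assumes ab: "a \<le> b" and fc: "continuous_on {a..b} f" and B: "\<forall>x\<in>{a..b}. \<bar>f x\<bar> \<le> B"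
  shows "\<bar>integral {a..b} f\<bar> \<le> B * (b - a)"
proof -
  have B0: "0 \<le> B" using B ab by (meson abs_ge_zero atLeastAtMost_iff order_trans order_refl)
  have "(f has_integral integral {a..b} f) (cbox a b)"
    using integrable_continuous_interval[OF fc] by (simp add: integrable_integral)
  from has_integral_bound[OF B0 this] B ab show ?thesis by auto
qed

lemma picard:
  fixes Hf Df g :: "real \<Rightarrow> real"
  assumes D: "D > 0" and c: "c \<ge> 0" and h: "h > 0" and LH: "LH \<ge> 0" and LD: "LD \<ge> 0"
    and Hc: "continuous_on UNIV Hf" and Dc: "continuous_on UNIV Df" and gc: "continuous_on {L..L+h} g"
    and HL: "\<forall>x z. \<bar>Hf x - Hf z\<bar> \<le> LH * \<bar>x - z\<bar>" and DL: "\<forall>x z. \<bar>Df x - Df z\<bar> \<le> LD * \<bar>x - z\<bar>"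
    and Hb: "\<forall>x. \<bar>Hf x\<bar> \<le> R" and Db: "\<forall>x. \<bar>Df x\<bar> \<le> DM" and gb: "\<forall>s\<in>{L..L+h}. \<bar>g s\<bar> \<le> Bm"
    and contr: "h * ((c * LH + h * LD) / D) \<le> 1/2"
  shows "\<exists>y. continuous_on UNIV y \<and>
     (\<forall>t\<in>{L..L+h}. y t = u0 + integral {L..t} (\<lambda>s. (c * Hf (y s) + C0 + integral {L..s} (\<lambda>\<sigma>. Df (y \<sigma>) - g \<sigma>)) / D)) \<and>
     (\<forall>t\<in>{L..L+h}. \<bar>y t - u0\<bar> \<le> (t - L) * ((c*R + \<bar>C0\<bar> + h*(DM + Bm))/D))"
proof -
  define V where "V = (\<lambda>(y::real\<Rightarrow>real) s. (c * Hf (y s) + C0 + integral {L..s} (\<lambda>\<sigma>. Df (y \<sigma>) - g \<sigma>)) / D)"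
  define Vb where "Vb = (c*R + \<bar>C0\<bar> + h*(DM + Bm))/D"
  define \<Lambda> where "\<Lambda> = (c * LH + h * LD) / D"
  have DM0: "DM \<ge> 0" using Db by (meson abs_ge_zero order_trans)
  have Bm0: "Bm \<ge> 0" using gb h by (metis abs_ge_zero atLeastAtMost_iff order_trans less_add_same_cancel1 less_imp_le order_refl)
  have R0: "R \<ge> 0" using Hb by (meson abs_ge_zero order_trans)
  have intc: "continuous_on {L..L+h} (\<lambda>\<sigma>. Df (y \<sigma>) - g \<sigma>)" if yc: "continuous_on UNIV y" for y
    by (intro continuous_intros gc continuous_on_compose2[OF Dc continuous_on_subset[OF yc]]) auto
  have Vc: "continuous_on {L..L+h} (V y)" if yc: "continuous_on UNIV y" for y
  proof -
    have "continuous_on {L..L+h} (\<lambda>s. integral {L..s} (\<lambda>\<sigma>. Df (y \<sigma>) - g \<sigma>))"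
      by (rule indefinite_integral_continuous_1[OF integrable_continuous_interval[OF intc[OF yc]]])
    moreover have "continuous_on {L..L+h} (\<lambda>s. Hf (y s))"
      by (rule continuous_on_compose2[OF Hc continuous_on_subset[OF yc]]) auto
    ultimately show ?thesis unfolding V_def by (intro continuous_intros) (use D in auto)
  qed
  have Vbd: "\<bar>V y s\<bar> \<le> Vb" if yc: "continuous_on UNIV y" and s: "s \<in> {L..L+h}" for y s
  proof -
    have "\<bar>integral {L..s} (\<lambda>\<sigma>. Df (y \<sigma>) - g \<sigma>)\<bar> \<le> (DM + Bm) * (s - L)"
    proof (rule int_abs_bound)
      show "L \<le> s" using s by simp
      show "continuous_on {L..s} (\<lambda>\<sigma>. Df (y \<sigma>) - g \<sigma>)"
        by (rule continuous_on_subset[OF intc[OF yc]]) (use s in auto)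
      show "\<forall>x\<in>{L..s}. \<bar>Df (y x) - g x\<bar> \<le> DM + Bm"
      proof
        fix x assume x: "x \<in> {L..s}"
        have "\<bar>Df (y x)\<bar> \<le> DM" using Db by blast
        moreover have "\<bar>g x\<bar> \<le> Bm" using gb x s by auto
        ultimately show "\<bar>Df (y x) - g x\<bar> \<le> DM + Bm" using abs_triangle_ineq4[of "Df (y x)" "g x"] by linarith
      qed
    qed
    also have "\<dots> \<le> (DM + Bm) * h" using s DM0 Bm0 by (intro mult_left_mono) auto
    finally have i: "\<bar>integral {L..s} (\<lambda>\<sigma>. Df (y \<sigma>) - g \<sigma>)\<bar> \<le> h * (DM + Bm)" by (simp add: mult.commute)
    have "\<bar>c * Hf (y s)\<bar> \<le> c * R" using Hb c by (simp add: abs_mult mult_left_mono)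
    then have "\<bar>c * Hf (y s) + C0 + integral {L..s} (\<lambda>\<sigma>. Df (y \<sigma>) - g \<sigma>)\<bar> \<le> c*R + \<bar>C0\<bar> + h*(DM + Bm)"
      using i by linarith
    then show ?thesis unfolding V_def Vb_def using D by (simp add: divide_right_mono)
  qed
  have Vd: "\<bar>V y s - V z s\<bar> \<le> \<Lambda> * M"
    if yc: "continuous_on UNIV y" and zc: "continuous_on UNIV z" and M: "\<forall>\<sigma>. \<bar>y \<sigma> - z \<sigma>\<bar> \<le> M"
      and s: "s \<in> {L..L+h}" for y z M s
  proof -
    have M0: "M \<ge> 0" using M by (meson abs_ge_zero order_trans)
    have ii: "integral {L..s} (\<lambda>\<sigma>. Df (y \<sigma>) - g \<sigma>) - integral {L..s} (\<lambda>\<sigma>. Df (z \<sigma>) - g \<sigma>)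
        = integral {L..s} (\<lambda>\<sigma>. Df (y \<sigma>) - Df (z \<sigma>))"
    proof -
      have i1: "(\<lambda>\<sigma>. Df (y \<sigma>) - g \<sigma>) integrable_on {L..s}"
        using integrable_continuous_interval[OF continuous_on_subset[OF intc[OF yc]]] s by auto
      have i2: "(\<lambda>\<sigma>. Df (z \<sigma>) - g \<sigma>) integrable_on {L..s}"
        using integrable_continuous_interval[OF continuous_on_subset[OF intc[OF zc]]] s by auto
      show ?thesis using integral_diff[OF i1 i2] by simp
    qed
    have "\<bar>integral {L..s} (\<lambda>\<sigma>. Df (y \<sigma>) - Df (z \<sigma>))\<bar> \<le> (LD * M) * (s - L)"
    proof (rule int_abs_bound)
      show "L \<le> s" using s by simp
      show "continuous_on {L..s} (\<lambda>\<sigma>. Df (y \<sigma>) - Df (z \<sigma>))"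
        by (intro continuous_intros continuous_on_compose2[OF Dc continuous_on_subset[OF yc]]
            continuous_on_compose2[OF Dc continuous_on_subset[OF zc]]) auto
      show "\<forall>x\<in>{L..s}. \<bar>Df (y x) - Df (z x)\<bar> \<le> LD * M"
        using DL M LD by (meson mult_left_mono order_trans)
    qed
    also have "\<dots> \<le> (LD * M) * h" using s LD M0 by (intro mult_left_mono) auto
    finally have i: "\<bar>integral {L..s} (\<lambda>\<sigma>. Df (y \<sigma>) - Df (z \<sigma>))\<bar> \<le> h * LD * M" by (simp add: mult_ac)
    have hh: "\<bar>c * Hf (y s) - c * Hf (z s)\<bar> \<le> c * LH * M"
    proof -
      have "\<bar>c * Hf (y s) - c * Hf (z s)\<bar> = c * \<bar>Hf (y s) - Hf (z s)\<bar>" using c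
        by (simp add: abs_mult right_diff_distrib[symmetric])
      also have "\<dots> \<le> c * (LH * M)" using HL M LH c by (meson mult_left_mono order_trans)
      finally show ?thesis by simp
    qed
    have "V y s - V z s = ((c * Hf (y s) - c * Hf (z s)) + integral {L..s} (\<lambda>\<sigma>. Df (y \<sigma>) - Df (z \<sigma>))) / D"
    proof -
      have "V y s - V z s = ((c * Hf (y s) + C0 + integral {L..s} (\<lambda>\<sigma>. Df (y \<sigma>) - g \<sigma>))
          - (c * Hf (z s) + C0 + integral {L..s} (\<lambda>\<sigma>. Df (z \<sigma>) - g \<sigma>))) / D"
        unfolding V_def by (rule diff_divide_distrib[symmetric])
      moreover have "(c * Hf (y s) + C0 + integral {L..s} (\<lambda>\<sigma>. Df (y \<sigma>) - g \<sigma>))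
          - (c * Hf (z s) + C0 + integral {L..s} (\<lambda>\<sigma>. Df (z \<sigma>) - g \<sigma>)) =
          (c * Hf (y s) - c * Hf (z s)) + integral {L..s} (\<lambda>\<sigma>. Df (y \<sigma>) - Df (z \<sigma>))"
        using ii by linarith
      ultimately show ?thesis by simp
    qed
    also have "\<bar>\<dots>\<bar> \<le> (c * LH * M + h * LD * M) / D"
      using hh i D by (simp add: divide_right_mono)
    also have "\<dots> = \<Lambda> * M" unfolding \<Lambda>_def by (simp add: field_simps)
    finally show ?thesis .
  qed
  define \<tau> where "\<tau> = (\<lambda>t::real. max L (min (L+h) t))"
  have \<tau>r: "\<tau> t \<in> {L..L+h}" for t unfolding \<tau>_def using h by auto
  have \<tau>c: "continuous_on UNIV \<tau>" unfolding \<tau>_def by (intro continuous_intros)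
  have \<tau>id: "\<tau> t = t" if "t \<in> {L..L+h}" for t unfolding \<tau>_def using that by auto
  define P where "P = (\<lambda>y t. u0 + integral {L..\<tau> t} (V y))"
  have Pib: "\<bar>integral {L..t} (V y)\<bar> \<le> Vb * (t - L)"
    if yc: "continuous_on UNIV y" and t: "t \<in> {L..L+h}" for y t
  proof (rule int_abs_bound)
    show "L \<le> t" using t by simp
    show "continuous_on {L..t} (V y)" by (rule continuous_on_subset[OF Vc[OF yc]]) (use t in auto)
    show "\<forall>x\<in>{L..t}. \<bar>V y x\<bar> \<le> Vb" using Vbd[OF yc] t by auto
  qed
  have Pbc: "P y \<in> bcontfun" if yc: "continuous_on UNIV y" for y
  proof (rule bcontfun_normI)
    have ic: "continuous_on {L..L+h} (\<lambda>x. integral {L..x} (V y))"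
      by (rule indefinite_integral_continuous_1[OF integrable_continuous_interval[OF Vc[OF yc]]])
    have "continuous_on UNIV (\<lambda>t. integral {L..\<tau> t} (V y))"
      by (rule continuous_on_compose2[OF ic \<tau>c]) (use \<tau>r in auto)
    then show "continuous_on UNIV (P y)" unfolding P_def by (intro continuous_intros)
    show "norm (P y t) \<le> \<bar>u0\<bar> + \<bar>Vb\<bar> * h" for t
    proof -
      have "\<bar>integral {L..\<tau> t} (V y)\<bar> \<le> Vb * (\<tau> t - L)" using Pib[OF yc \<tau>r] .
      also have "\<dots> \<le> \<bar>Vb\<bar> * (\<tau> t - L)" using \<tau>r[of t] by (intro mult_right_mono) auto
      also have "\<dots> \<le> \<bar>Vb\<bar> * h" using \<tau>r[of t] by (intro mult_left_mono) auto
      finally show ?thesis unfolding P_def by simp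
    qed
  qed
  define \<Phi> where "\<Phi> = (\<lambda>f::real \<Rightarrow>\<^sub>C real. Bcontfun (P (apply_bcontfun f)))"
  have \<Phi>A: "apply_bcontfun (\<Phi> f) = P (apply_bcontfun f)" for f
    unfolding \<Phi>_def by (rule Bcontfun_inverse[OF Pbc]) simp
  have "\<exists>!f. \<Phi> f = f"
  proof (rule banach_fix_type[of "1/2"])
    show "\<forall>x y. dist (\<Phi> x) (\<Phi> y) \<le> 1 / 2 * dist x y"
    proof (intro allI)
      fix f1 f2 :: "real \<Rightarrow>\<^sub>C real"
      show "dist (\<Phi> f1) (\<Phi> f2) \<le> 1 / 2 * dist f1 f2"
      proof (rule dist_bound)
        fix t
        have M: "\<forall>\<sigma>. \<bar>f1 \<sigma> - f2 \<sigma>\<bar> \<le> dist f1 f2" using dist_bounded[of f1 _ f2] by (simp add: dist_real_def)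
        have "dist (\<Phi> f1 t) (\<Phi> f2 t) = \<bar>integral {L..\<tau> t} (V f1) - integral {L..\<tau> t} (V f2)\<bar>"
          unfolding \<Phi>A P_def by (simp add: dist_real_def)
        also have "\<dots> = \<bar>integral {L..\<tau> t} (\<lambda>s. V f1 s - V f2 s)\<bar>"
        proof -
          have "V f1 integrable_on {L..\<tau> t}" "V f2 integrable_on {L..\<tau> t}"
            using integrable_continuous_interval[OF continuous_on_subset[OF Vc]] \<tau>r[of t] by auto
          then show ?thesis by (simp add: integral_diff)
        qed
        also have "\<dots> \<le> (\<Lambda> * dist f1 f2) * (\<tau> t - L)"
        proof (rule int_abs_bound)
          show "L \<le> \<tau> t" using \<tau>r[of t] by simp
          show "continuous_on {L..\<tau> t} (\<lambda>s. V f1 s - V f2 s)"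
            using \<tau>r[of t] by (intro continuous_intros continuous_on_subset[OF Vc]) auto
          show "\<forall>x\<in>{L..\<tau> t}. \<bar>V f1 x - V f2 x\<bar> \<le> \<Lambda> * dist f1 f2"
            using Vd[OF _ _ M] \<tau>r[of t] by auto
        qed
        also have "\<dots> \<le> (\<Lambda> * dist f1 f2) * h"
          using \<tau>r[of t] D c LH LD h unfolding \<Lambda>_def by (intro mult_left_mono) auto
        also have "\<dots> = (h * \<Lambda>) * dist f1 f2" by simp
        also have "\<dots> \<le> 1/2 * dist f1 f2" using contr unfolding \<Lambda>_def by (intro mult_right_mono) auto
        finally show "dist (\<Phi> f1 t) (\<Phi> f2 t) \<le> 1 / 2 * dist f1 f2" .
      qed
    qed
  qed auto
  then obtain f where f: "\<Phi> f = f" by blast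
  define y where "y = apply_bcontfun f"
  have yc: "continuous_on UNIV y" unfolding y_def by simp
  have yeq: "y t = P y t" for t using f \<Phi>A unfolding y_def by metis
  show ?thesis
  proof (intro exI conjI ballI)
    show "continuous_on UNIV y" by fact
    show "y t = u0 + integral {L..t} (\<lambda>s. (c * Hf (y s) + C0 + integral {L..s} (\<lambda>\<sigma>. Df (y \<sigma>) - g \<sigma>)) / D)"
      if "t \<in> {L..L+h}" for t
      using yeq[of t] \<tau>id[OF that] unfolding P_def V_def by simp
    show "\<bar>y t - u0\<bar> \<le> (t - L) * ((c*R + \<bar>C0\<bar> + h*(DM + Bm))/D)" if t: "t \<in> {L..L+h}" for t
      using yeq[of t] \<tau>id[OF t] Pib[OF yc t] unfolding P_def Vb_def by (simp add: mult.commute)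
  qed
qed



lemma powr_lip:
  fixes lo x z q :: real
  assumes lo: "0 < lo" "lo \<le> x" "lo \<le> z" and q: "0 < q" "q \<le> 1"
  shows "\<bar>x powr q - z powr q\<bar> \<le> q * lo powr (q - 1) * \<bar>x - z\<bar>"
proof -
  have main: "\<bar>b powr q - a powr q\<bar> \<le> q * lo powr (q - 1) * \<bar>b - a\<bar>" if ab: "lo \<le> a" "a < b" for a b
  proof -
    have "\<And>x. a \<le> x \<Longrightarrow> x \<le> b \<Longrightarrow> ((\<lambda>x. x powr q) has_real_derivative q * x powr (q - 1)) (at x)"
      using ab lo by (auto intro!: has_real_derivative_powr)
    from MVT2[OF ab(2) this] obtain \<xi> where xi: "a < \<xi>" "\<xi> < b"
      and eq: "b powr q - a powr q = (b - a) * (q * \<xi> powr (q - 1))" by blast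
    have "\<xi> powr (q - 1) \<le> lo powr (q - 1)" using xi ab lo q by (intro powr_mono2') auto
    moreover have "\<xi> powr (q - 1) \<ge> 0" by simp
    ultimately have "\<bar>(b - a) * (q * \<xi> powr (q - 1))\<bar> \<le> (b - a) * (q * lo powr (q - 1))"
      using ab q by (simp add: abs_mult mult_left_mono)
    then show ?thesis using eq ab by (simp add: mult_ac)
  qed
  show ?thesis
  proof (cases x z rule: linorder_cases)
    case less then show ?thesis using main[of x z] lo by (simp add: abs_minus_commute)
  next
    case equal then show ?thesis by simp
  next
    case greater then show ?thesis using main[of z x] lo by simp
  qed
qed

lemma deriv_at_pos:
  assumes "\<forall>s\<ge>0. (d has_real_derivative d' s) (at s within {0..})" "s > 0"
  shows "(d has_real_derivative d' s) (at s)"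
proof -
  have "at s within {0..} = at s" using assms(2) by (intro at_within_interior) auto
  then show ?thesis using assms by (metis less_le)
qed

lemma deriv_lip:
  fixes d d' :: "real \<Rightarrow> real"
  assumes dd: "\<forall>s\<ge>0. (d has_real_derivative d' s) (at s within {0..})" and d'c: "continuous_on {0..} d'"
    and ab: "0 < a" "a \<le> b"
  shows "\<exists>K\<ge>0. \<forall>x\<in>{a..b}. \<forall>z\<in>{a..b}. \<bar>d x - d z\<bar> \<le> K * \<bar>x - z\<bar>"
proof -
  have "compact (d' ` {a..b})"
    by (rule compact_continuous_image[OF continuous_on_subset[OF d'c]]) (use ab in auto)
  then obtain K0 where K0: "\<forall>y\<in>d' ` {a..b}. norm y \<le> K0"
    using compact_imp_bounded bounded_iff by metis
  define K where "K = max K0 0"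
  have K: "\<bar>d' s\<bar> \<le> K" if "s \<in> {a..b}" for s using K0 that unfolding K_def by force
  have main: "\<bar>d v - d u\<bar> \<le> K * \<bar>v - u\<bar>" if uv: "u \<in> {a..b}" "v \<in> {a..b}" "u < v" for u v
  proof -
    have "\<And>x. u \<le> x \<Longrightarrow> x \<le> v \<Longrightarrow> (d has_real_derivative d' x) (at x)"
      using uv ab by (auto intro!: deriv_at_pos[OF dd])
    from MVT2[OF uv(3) this] obtain \<xi> where xi: "u < \<xi>" "\<xi> < v"
      and eq: "d v - d u = (v - u) * d' \<xi>" by blast
    have "\<bar>d' \<xi>\<bar> \<le> K" using K xi uv by auto
    then show ?thesis using eq uv by (simp add: abs_mult mult_left_mono mult.commute)
  qed
  show ?thesis
  proof (intro exI conjI ballI)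
    show "0 \<le> K" unfolding K_def by simp
    fix x z assume xz: "x \<in> {a..b}" "z \<in> {a..b}"
    show "\<bar>d x - d z\<bar> \<le> K * \<bar>x - z\<bar>"
    proof (cases x z rule: linorder_cases)
      case less then show ?thesis using main[of x z] xz by (simp add: abs_minus_commute)
    next
      case equal then show ?thesis using K_def by simp
    next
      case greater then show ?thesis using main[of z x] xz by simp
    qed
  qed
qed

lemma ext_cont:
  fixes \<phi> :: "real \<Rightarrow> real"
  assumes c: "continuous_on {..<L} \<phi>" and lim: "(\<phi> \<longlongrightarrow> p) (at_left L)"
  shows "continuous_on UNIV (\<lambda>t. if t < L then \<phi> t else p)"
proof (rule continuous_at_imp_continuous_on, rule ballI)
  fix x :: real
  show "isCont (\<lambda>t. if t < L then \<phi> t else p) x"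
  proof (cases x L rule: linorder_cases)
    case less
    have "isCont \<phi> x" using continuous_on_interior[OF c, of x] less by (simp add: interior_open)
    moreover have "eventually (\<lambda>t. \<phi> t = (if t < L then \<phi> t else p)) (nhds x)"
      using eventually_nhds_in_open[of "{..<L}" x] less by (auto elim!: eventually_mono)
    ultimately show ?thesis using isCont_cong[of _ _ x] by fast
  next
    case greater
    have "isCont (\<lambda>_. p) x" by simp
    moreover have "eventually (\<lambda>t. p = (if t < L then \<phi> t else p)) (nhds x)"
      using eventually_nhds_in_open[of "{L<..}" x] greater by (auto elim!: eventually_mono)
    ultimately show ?thesis using isCont_cong[of _ _ x] by fast
  next
    case equal
    have l: "((\<lambda>t. if t < L then \<phi> t else p) \<longlongrightarrow> p) (at_left L)"
    proof -
      have "eventually (\<lambda>t. t < L) (at_left L)" by (simp add: eventually_at_filter)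
      then have "eventually (\<lambda>t. \<phi> t = (if t < L then \<phi> t else p)) (at_left L)"
        by (rule eventually_mono) simp
      then show ?thesis using lim tendsto_cong by fast
    qed
    have r: "((\<lambda>t. if t < L then \<phi> t else p) \<longlongrightarrow> p) (at_right L)"
    proof -
      have "eventually (\<lambda>t. p = (if t < L then \<phi> t else p)) (at_right L)"
        using eventually_at_right_less[of L] by (rule eventually_mono) simp
      then show ?thesis using tendsto_const[of p "at_right L"] tendsto_cong by fast
    qed
    show ?thesis unfolding isCont_def using filterlim_split_at[OF l r] equal by simp
  qed
qed



lemma extension:
  fixes \<phi> b d d' :: "real \<Rightarrow> real" and L p Bm :: real
  assumes ws: "wave_sol m D r b d c \<phi> (ereal L)"
    and m: "m > 1" and D: "D > 0" and c: "c > 0" and r: "r > 0"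
    and bc: "continuous_on {0..} b" and dc: "continuous_on {0..} d" and b0: "b 0 = 0" and d0: "d 0 = 0"
    and dd: "\<forall>s\<ge>0. (d has_real_derivative d' s) (at s within {0..})" and d'c: "continuous_on {0..} d'"
    and bB: "\<forall>s\<ge>0. \<bar>b s\<bar> \<le> Bm"
    and lim: "(\<phi> \<longlongrightarrow> p) (at_left L)" and p: "p > 0"
  shows "\<exists>\<psi> L'. wave_sol m D r b d c \<psi> L' \<and> ereal L < L' \<and> (\<forall>t. t < L \<longrightarrow> \<psi> t = \<phi> t)"
proof -
  note B = wave_sol_basic[OF ws]
  have L0: "L > 0" using B(1) by (simp add: zero_ereal_def)
  have setL: "{t. ereal t < ereal L} = {..<L}" by auto
  have \<phi>c: "continuous_on {..<L} \<phi>" using B(5) setL by simp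
  define \<phi>t where "\<phi>t = (\<lambda>t. if t < L then \<phi> t else p)"
  have \<phi>tc: "continuous_on UNIV \<phi>t" unfolding \<phi>t_def by (rule ext_cont[OF \<phi>c lim])
  have \<phi>tnn: "\<phi>t t \<ge> 0" for t unfolding \<phi>t_def using B(4) p by auto
  have cr: "c * r > 0" using c r by simp
  define g where "g = (\<lambda>s. b (\<phi>t (s - c*r)))"
  have gc: "continuous_on UNIV g" unfolding g_def
    by (rule continuous_on_compose2[OF bc continuous_on_compose2[OF \<phi>tc]])
       (auto intro!: continuous_intros simp: \<phi>tnn)
  have gb: "\<bar>g s\<bar> \<le> Bm" for s unfolding g_def using bB \<phi>tnn by auto
  define k0 where "k0 = (\<lambda>s. d (\<phi>t s) - g s)"
  define C0 where "C0 = integral {0..L} k0"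
  define u0 where "u0 = p powr m"
  have u0: "u0 > 0" unfolding u0_def using p by simp
  define lo where "lo = u0 / 2"
  define hi where "hi = 2 * u0"
  have lo: "lo > 0" "lo < u0" "u0 + lo < hi" unfolding lo_def hi_def using u0 by auto
  define cl where "cl = (\<lambda>x. max lo (min hi x))"
  have clr: "lo \<le> cl x" "cl x \<le> hi" for x unfolding cl_def using lo unfolding hi_def by auto
  have cll: "\<bar>cl x - cl z\<bar> \<le> \<bar>x - z\<bar>" for x z unfolding cl_def by auto
  have clc: "continuous_on UNIV cl" unfolding cl_def by (intro continuous_intros)
  define Hf where "Hf = (\<lambda>x. cl x powr (1/m))"
  define \<rho>1 where "\<rho>1 = lo powr (1/m)"
  define \<rho>2 where "\<rho>2 = hi powr (1/m)"
  have \<rho>: "0 < \<rho>1" "\<rho>1 \<le> \<rho>2" unfolding \<rho>1_def \<rho>2_def using lo clr[of 0] m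
    by (auto intro!: powr_mono2)
  have Hr: "\<rho>1 \<le> Hf x" "Hf x \<le> \<rho>2" for x unfolding Hf_def \<rho>1_def \<rho>2_def using lo clr[of x] m
    by (auto intro!: powr_mono2)
  define LH where "LH = (1/m) * lo powr (1/m - 1)"
  have LH0: "LH \<ge> 0" unfolding LH_def using m by simp
  have HL: "\<bar>Hf x - Hf z\<bar> \<le> LH * \<bar>x - z\<bar>" for x z
  proof -
    have "\<bar>Hf x - Hf z\<bar> \<le> LH * \<bar>cl x - cl z\<bar>" unfolding Hf_def LH_def
      by (rule powr_lip) (use lo clr m in auto)
    also have "\<dots> \<le> LH * \<bar>x - z\<bar>" using cll LH0 by (intro mult_left_mono) auto
    finally show ?thesis .
  qed
  have Hc: "continuous_on UNIV Hf" unfolding Hf_def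
  proof (rule continuous_on_powr'[OF clc continuous_on_const])
    have "0 < cl x" for x using clr(1)[of x] lo(1) by linarith
    then show "\<forall>x\<in>UNIV. 0 \<le> cl x \<and> (cl x = 0 \<longrightarrow> 0 < 1 / m)" by (metis less_imp_le less_irrefl)
  qed
  obtain K where K: "K \<ge> 0" "\<forall>x\<in>{\<rho>1..\<rho>2}. \<forall>z\<in>{\<rho>1..\<rho>2}. \<bar>d x - d z\<bar> \<le> K * \<bar>x - z\<bar>"
    using deriv_lip[OF dd d'c \<rho>] by blast
  define Df where "Df = (\<lambda>x. d (Hf x))"
  define LD where "LD = K * LH"
  have LD0: "LD \<ge> 0" unfolding LD_def using K LH0 by simp
  have DL: "\<bar>Df x - Df z\<bar> \<le> LD * \<bar>x - z\<bar>" for x z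
  proof -
    have "\<bar>Df x - Df z\<bar> \<le> K * \<bar>Hf x - Hf z\<bar>" unfolding Df_def using K Hr by auto
    also have "\<dots> \<le> K * (LH * \<bar>x - z\<bar>)" using HL K by (intro mult_left_mono) auto
    finally show ?thesis unfolding LD_def by (simp add: mult_ac)
  qed
  have Dc: "continuous_on UNIV Df" unfolding Df_def
    by (rule continuous_on_compose2[OF dc Hc]) (use Hr \<rho> in \<open>auto intro: less_le_trans[of 0 "\<rho>1"] less_imp_le\<close>)
  define DM where "DM = \<bar>d \<rho>1\<bar> + K * (\<rho>2 - \<rho>1)"
  have Db: "\<bar>Df x\<bar> \<le> DM" for x
  proof -
    have "\<bar>d (Hf x) - d \<rho>1\<bar> \<le> K * \<bar>Hf x - \<rho>1\<bar>" 
    proof -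
      have "Hf x \<in> {\<rho>1..\<rho>2}" "\<rho>1 \<in> {\<rho>1..\<rho>2}" using Hr[of x] \<rho> by auto
      then show ?thesis using K(2) by blast
    qed
    also have "\<dots> \<le> K * (\<rho>2 - \<rho>1)" using Hr[of x] K by (intro mult_left_mono) auto
    finally show ?thesis unfolding Df_def DM_def by linarith
  qed
  have Hb: "\<bar>Hf x\<bar> \<le> \<rho>2" for x using Hr[of x] \<rho> by auto
  define Vb0 where "Vb0 = (c*\<rho>2 + \<bar>C0\<bar> + c*r*(DM + Bm))/D"
  define \<Lambda>0 where "\<Lambda>0 = (c*LH + c*r*LD)/D"
  have DM0: "DM \<ge> 0" unfolding DM_def using K \<rho> by simp
  have Bm0: "Bm \<ge> 0" using gb[of 0] by linarith
  have Vb0: "Vb0 \<ge> 0" unfolding Vb0_def using c r D DM0 Bm0 \<rho> by (auto intro!: divide_nonneg_pos add_nonneg_nonneg)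
  have \<Lambda>0: "\<Lambda>0 \<ge> 0" unfolding \<Lambda>0_def using c r D LH0 LD0 by (auto intro!: divide_nonneg_pos add_nonneg_nonneg)
  define h where "h = min (c*r) (min (lo/(Vb0+1)) (1/(2*\<Lambda>0+1)))"
  have h: "h > 0" "h \<le> c*r" "h \<le> lo/(Vb0+1)" "h \<le> 1/(2*\<Lambda>0+1)"
    unfolding h_def using cr lo Vb0 \<Lambda>0 by auto
  have contr: "h * ((c * LH + h * LD) / D) \<le> 1/2"
  proof -
    have "(c * LH + h * LD) / D \<le> \<Lambda>0" unfolding \<Lambda>0_def using h LD0 D
      by (intro divide_right_mono add_left_mono mult_right_mono) auto
    then have "h * ((c * LH + h * LD) / D) \<le> h * \<Lambda>0" using h by (intro mult_left_mono) auto
    also have "\<dots> \<le> 1/(2*\<Lambda>0+1) * \<Lambda>0" using h \<Lambda>0 by (intro mult_right_mono) auto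
    also have "\<dots> = \<Lambda>0 / (2*\<Lambda>0+1)" by simp
    also have "\<dots> \<le> 1/2" using \<Lambda>0 by (simp add: divide_simps)
    finally show ?thesis .
  qed
  obtain y where yc: "continuous_on UNIV y"
    and yeq: "\<forall>t\<in>{L..L+h}. y t = u0 + integral {L..t} (\<lambda>s. (c * Hf (y s) + C0 + integral {L..s} (\<lambda>\<sigma>. Df (y \<sigma>) - g \<sigma>)) / D)"
    and ybd: "\<forall>t\<in>{L..L+h}. \<bar>y t - u0\<bar> \<le> (t - L) * ((c*\<rho>2 + \<bar>C0\<bar> + h*(DM + Bm))/D)"
    using picard[OF D less_imp_le[OF c] h(1) LH0 LD0 Hc Dc continuous_on_subset[OF gc] allI[OF allI[OF HL]]
        allI[OF allI[OF DL]] allI[OF Hb] allI[OF Db] _ contr, of L Bm u0 C0] gb by auto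
  have yrange: "lo < y t \<and> y t < hi" if t: "t \<in> {L..L+h}" for t
  proof -
    have "(c*\<rho>2 + \<bar>C0\<bar> + h*(DM + Bm))/D \<le> Vb0" unfolding Vb0_def using h D DM0 Bm0
      by (intro divide_right_mono add_left_mono mult_right_mono) auto
    then have "\<bar>y t - u0\<bar> \<le> (t - L) * Vb0" using ybd t by (meson atLeastAtMost_iff diff_ge_0_iff_ge mult_left_mono order_trans)
    also have "\<dots> \<le> h * Vb0" using t Vb0 by (intro mult_right_mono) auto
    also have "\<dots> \<le> lo / (Vb0 + 1) * Vb0" using h Vb0 by (intro mult_right_mono) auto
    also have "\<dots> < lo" using lo Vb0 by (simp add: divide_simps)
    finally have "\<bar>y t - u0\<bar> < lo" .
    then show ?thesis using lo unfolding lo_def hi_def abs_less_iff by linarith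
  qed
  have ypos: "y t > 0" if "t \<in> {L..L+h}" for t using yrange[OF that] lo by auto
  have Hy: "Hf (y t) = y t powr (1/m)" if "t \<in> {L..L+h}" for t
    using yrange[OF that] unfolding Hf_def cl_def by auto
  have yL: "y L = u0" using yeq h by auto
  define \<psi> where "\<psi> = (\<lambda>t. if t \<le> L then \<phi>t t else y t powr (1/m))"
  have \<psi>1: "\<psi> t = \<phi> t" if "t < L" for t using that unfolding \<psi>_def \<phi>t_def by auto
  have pL: "y L powr (1/m) = p" using yL p m unfolding u0_def by (simp add: powr_powr)
  have \<psi>2: "\<psi> t = y t powr (1/m)" if "t \<in> {L..L+h}" for t
    using that pL unfolding \<psi>_def \<phi>t_def by auto
  have \<psi>3: "\<psi> t = \<phi>t t" if "t \<le> L" for t using that unfolding \<psi>_def by auto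
  have \<psi>z: "\<psi> t = 0" if "t \<le> 0" for t using that L0 \<psi>1 B(2) by auto
  have \<psi>pos: "\<psi> t > 0" if "0 < t" "t \<le> L+h" for t
  proof (cases "t < L")
    case True then show ?thesis using \<psi>1 B(3) that by auto
  next
    case False
    then have tt: "t \<in> {L..L+h}" using that by auto
    show ?thesis using \<psi>2[OF tt] ypos[OF tt] by simp
  qed
  have \<psi>nn: "\<psi> t \<ge> 0" if "t \<le> L+h" for t using \<psi>z \<psi>pos that by (cases "t \<le> 0") (auto intro: less_imp_le)
  have \<psi>c: "continuous_on {..L+h} \<psi>" unfolding \<psi>_def
  proof (rule continuous_on_cases_le[where h = "\<lambda>x. x"])
    show "continuous_on {x \<in> {..L + h}. x \<le> L} \<phi>t" using \<phi>tc by (rule continuous_on_subset) auto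
    show "continuous_on {x \<in> {..L + h}. L \<le> x} (\<lambda>t. y t powr (1 / m))"
      by (rule continuous_on_powr'[OF continuous_on_subset[OF yc] continuous_on_const])
         (use ypos m in \<open>auto intro: less_imp_le\<close>)
    show "continuous_on {..L + h} (\<lambda>x. x)" by (rule continuous_on_id)
    show "\<And>x. x \<in> {..L + h} \<Longrightarrow> x = L \<Longrightarrow> \<phi>t x = y x powr (1 / m)" using pL unfolding \<phi>t_def by simp
  qed
  define k where "k = (\<lambda>s. d (\<psi> s) - b (\<psi> (s - c*r)))"
  have k1: "k s = k0 s" if "s \<le> L" for s
  proof -
    have "s - c*r \<le> L" using that cr by linarith
    then show ?thesis unfolding k_def k0_def g_def using \<psi>3 that by simp
  qed
  have k2: "k s = Df (y s) - g s" if "s \<in> {L..L+h}" for s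
  proof -
    have "s - c*r \<le> L" using that h by auto
    then show ?thesis unfolding k_def Df_def g_def using \<psi>3 \<psi>2 Hy that by simp
  qed
  have kc: "continuous_on {..L+h} k" unfolding k_def
  proof (intro continuous_intros)
    show "continuous_on {..L + h} (\<lambda>x. d (\<psi> x))"
      by (rule continuous_on_compose2[OF dc \<psi>c]) (use \<psi>nn in auto)
    have "continuous_on {..L + h} (\<lambda>x. \<psi> (x - c * r))"
      by (rule continuous_on_compose2[OF \<psi>c]) (use cr in \<open>auto intro!: continuous_intros\<close>)
    then show "continuous_on {..L + h} (\<lambda>x. b (\<psi> (x - c * r)))"
      by (rule continuous_on_compose2[OF bc]) (use \<psi>nn cr in auto)
  qed
  define W where "W = (\<lambda>t. (c * \<psi> t + integral {0..t} k) / D)"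
  define U where "U = (\<lambda>s. \<psi> s powr m)"
  have dl: "(U has_real_derivative W t) (at t)" if t: "t < L" for t
  proof -
    have tL: "ereal t < ereal L" using t by simp
    have diff: "(\<lambda>s. \<phi> s powr m) differentiable (at t)" using ws tL unfolding wave_sol_def by auto
    have d1: "((\<lambda>s. \<phi> s powr m) has_real_derivative deriv (\<lambda>s. \<phi> s powr m) t) (at t)"
      using diff by (simp add: DERIV_deriv_iff_real_differentiable)
    have ide: "deriv (\<lambda>s. \<phi> s powr m) t = (c * \<phi> t + integral {0..t} (\<lambda>s. d (\<phi> s) - b (\<phi> (s - c*r)))) / D"
      by (rule wave_sol_identity[OF ws m D c r bc dc b0 d0 tL])
    have "integral {0..t} (\<lambda>s. d (\<phi> s) - b (\<phi> (s - c*r))) = integral {0..t} k"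
    proof (rule integral_cong)
      fix s assume "s \<in> {0..t}"
      then have "s < L" "s - c*r < L" using t cr by auto
      then show "d (\<phi> s) - b (\<phi> (s - c*r)) = k s" unfolding k_def using \<psi>1 by simp
    qed
    then have "deriv (\<lambda>s. \<phi> s powr m) t = W t" unfolding W_def ide using \<psi>1[OF t] by simp
    with d1 have "((\<lambda>s. \<phi> s powr m) has_real_derivative W t) (at t)" by simp
    then show ?thesis unfolding U_def
      by (rule has_field_derivative_transform_within_open[of _ _ _ "{..<L}"]) (use t \<psi>1 in auto)
  qed
  define a where "a = L/2"
  have a: "0 < a" "a < L" unfolding a_def using L0 by auto
  have Ic: "continuous_on {0..L+h} (\<lambda>x. integral {0..x} k)"
    by (rule indefinite_integral_continuous_1[OF integrable_continuous_interval[OF continuous_on_subset[OF kc]]]) auto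
  have Wc: "continuous_on {a..L+h} W" unfolding W_def
    using continuous_on_subset[OF \<psi>c, of "{a..L+h}"] continuous_on_subset[OF Ic, of "{a..L+h}"] a D
    by (intro continuous_intros) auto
  have Uc: "continuous_on {..L+h} U" unfolding U_def
    by (rule continuous_on_powr'[OF \<psi>c continuous_on_const]) (use \<psi>nn m in auto)
  have Wint: "W integrable_on {u..v}" if "a \<le> u" "v \<le> L+h" for u v
    by (rule integrable_continuous_interval[OF continuous_on_subset[OF Wc]]) (use that in auto)
  have kint: "k integrable_on {u..v}" if "v \<le> L+h" for u v
    by (rule integrable_continuous_interval[OF continuous_on_subset[OF kc]]) (use that in auto)
  have rep1: "U x = U a + integral {a..x} W" if x: "x \<in> {a..L}" for x
  proof (cases "x = a")
    case True then show ?thesis by simp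
  next
    case False
    then have ax: "a < x" using x by auto
    define F where "F = (\<lambda>x. U x - integral {a..x} W)"
    have "continuous_on {a..x} F" unfolding F_def
      using continuous_on_subset[OF Uc, of "{a..x}"] x h
        indefinite_integral_continuous_1[OF Wint[of a x]] a
      by (intro continuous_intros) auto
    moreover have "DERIV F s :> 0" if s: "a < s" "s < x" for s
    proof -
      have "((\<lambda>x. integral {a..x} W) has_real_derivative W s) (at s within {a..L})"
        by (rule integral_has_real_derivative[OF continuous_on_subset[OF Wc]]) (use s x h in auto)
      then have i: "((\<lambda>x. integral {a..x} W) has_real_derivative W s) (at s)"
        using at_within_interior[of s "{a..L}"] s x by auto
      have "DERIV F s :> W s - W s" unfolding F_def by (intro derivative_intros dl i) (use s x in auto)
      then show ?thesis by simp
    qed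
    ultimately have "F x = F a" by (intro DERIV_isconst_end[OF ax]) auto
    then show ?thesis unfolding F_def by simp
  qed
  have UL: "U L = u0" unfolding U_def u0_def using \<psi>3[of L] unfolding \<phi>t_def by simp
  have VW: "(c * Hf (y s) + C0 + integral {L..s} (\<lambda>\<sigma>. Df (y \<sigma>) - g \<sigma>)) / D = W s" if s: "s \<in> {L..L+h}" for s
  proof -
    have "integral {0..s} k = integral {0..L} k + integral {L..s} k"
      using Henstock_Kurzweil_Integration.integral_combine[OF _ _ kint[of s 0], of L] s L0 by auto
    moreover have "integral {0..L} k = C0" unfolding C0_def by (rule integral_cong) (use k1 in auto)
    moreover have "integral {L..s} k = integral {L..s} (\<lambda>\<sigma>. Df (y \<sigma>) - g \<sigma>)"
      by (rule integral_cong) (use k2 s in auto)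
    ultimately show ?thesis unfolding W_def using \<psi>2[OF s] Hy[OF s] by simp
  qed
  have rep2: "U x = U a + integral {a..x} W" if x: "x \<in> {L..L+h}" for x
  proof -
    have "U x = y x" unfolding U_def using \<psi>2[OF x] ypos[OF x] m by (simp add: powr_powr)
    also have "\<dots> = u0 + integral {L..x} W"
    proof -
      have e1: "y x = u0 + integral {L..x} (\<lambda>s. (c * Hf (y s) + C0 + integral {L..s} (\<lambda>\<sigma>. Df (y \<sigma>) - g \<sigma>)) / D)"
        using yeq x by blast
      have e2: "integral {L..x} (\<lambda>s. (c * Hf (y s) + C0 + integral {L..s} (\<lambda>\<sigma>. Df (y \<sigma>) - g \<sigma>)) / D) = integral {L..x} W"
        by (rule integral_cong) (use VW x in auto)
      show ?thesis using e1 e2 by linarith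
    qed
    also have "\<dots> = U a + integral {a..L} W + integral {L..x} W" using rep1[of L] a UL by simp
    also have "\<dots> = U a + integral {a..x} W"
      using Henstock_Kurzweil_Integration.integral_combine[OF _ _ Wint[of a x], of L] x a by auto
    finally show ?thesis .
  qed
  have dr: "(U has_real_derivative W t) (at t)" if t: "L \<le> t" "t < L + h" for t
  proof -
    have "((\<lambda>x. integral {a..x} W) has_real_derivative W t) (at t within {a..L+h})"
      by (rule integral_has_real_derivative[OF Wc]) (use t a in auto)
    then have "((\<lambda>x. integral {a..x} W) has_real_derivative W t) (at t)"
      using at_within_interior[of t "{a..L+h}"] t a by auto
    then have "((\<lambda>x. U a + integral {a..x} W) has_real_derivative W t) (at t)"
      by (auto intro!: derivative_eq_intros)
    then show ?thesis
    proof (rule has_field_derivative_transform_within_open[of _ _ _ "{a<..<L+h}"])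
      show "open {a<..<L + h}" by simp
      show "t \<in> {a<..<L + h}" using t a by simp
      fix x assume x: "x \<in> {a<..<L + h}"
      show "U a + integral {a..x} W = U x"
      proof (cases "x \<le> L")
        case True then show ?thesis using rep1[of x] x by simp
      next
        case False then show ?thesis using rep2[of x] x by simp
      qed
    qed
  qed
  have wsn: "wave_sol m D r b d c \<psi> (ereal (L + h))"
  proof (rule wave_sol_intro[OF _ m D c r bc dc b0 d0])
    show "0 < ereal (L + h)" using L0 h by simp
    show "\<forall>t\<le>0. \<psi> t = 0" using \<psi>z by auto
    show "\<forall>t. 0 < t \<and> ereal t < ereal (L + h) \<longrightarrow> 0 < \<psi> t" using \<psi>pos by auto
    show "continuous_on {t. ereal t < ereal (L + h)} \<psi>" by (rule continuous_on_subset[OF \<psi>c]) auto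
    show "\<And>t. W t = (c * \<psi> t + integral {0..t} (\<lambda>s. d (\<psi> s) - b (\<psi> (s - c * r)))) / D"
      unfolding W_def k_def ..
    show "((\<lambda>s. \<psi> s powr m) has_real_derivative W t) (at t)" if "ereal t < ereal (L + h)" for t
      using dl dr that unfolding U_def by (cases "t < L") auto
  qed
  show ?thesis using wsn h \<psi>1 by (intro exI[of _ \<psi>] exI[of _ "ereal (L+h)"]) auto
qed



lemma decr_by_deriv:
  fixes f f' :: "real \<Rightarrow> real"
  assumes ab: "a \<le> b" and der: "\<And>x. a \<le> x \<Longrightarrow> x \<le> b \<Longrightarrow> (f has_real_derivative f' x) (at x)"
    and np: "\<And>x. a < x \<Longrightarrow> x < b \<Longrightarrow> f' x \<le> 0"
  shows "f b \<le> f a"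
proof (rule DERIV_nonpos_imp_decreasing_open[OF ab])
  fix x assume "a < x" "x < b"
  then show "\<exists>y. DERIV f x :> y \<and> y \<le> 0" using der[of x] np[of x] by (intro exI[of _ "f' x"]) auto
next
  show "continuous_on {a..b} f"
    using der by (meson DERIV_continuous atLeastAtMost_iff continuous_at_imp_continuous_on)
qed

lemma incr_by_deriv:
  fixes f f' :: "real \<Rightarrow> real"
  assumes ab: "a \<le> b" and der: "\<And>x. a \<le> x \<Longrightarrow> x \<le> b \<Longrightarrow> (f has_real_derivative f' x) (at x)"
    and np: "\<And>x. a < x \<Longrightarrow> x < b \<Longrightarrow> f' x \<ge> 0"
  shows "f a \<le> f b"
proof -
  have "(\<lambda>x. - f x) b \<le> (\<lambda>x. - f x) a"
    by (rule decr_by_deriv[OF ab, of _ "\<lambda>x. - f' x"]) (use der np in \<open>auto intro!: derivative_eq_intros\<close>)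
  then show ?thesis by simp
qed

lemma quad_bound:
  fixes A \<gamma> I :: real
  assumes "\<gamma> > 0"
  shows "A * I - \<gamma> * I^2 / 2 \<le> A^2 / (2 * \<gamma>)"
proof -
  have "A^2 / (2 * \<gamma>) - (A * I - \<gamma> * I^2 / 2) = (A - \<gamma> * I)^2 / (2 * \<gamma>)"
    using assms by (simp add: field_simps power2_eq_square)
  moreover have "(A - \<gamma> * I)^2 / (2 * \<gamma>) \<ge> 0" using assms by simp
  ultimately show ?thesis by linarith
qed

lemma apriori:
  fixes \<phi> b d :: "real \<Rightarrow> real" and L :: ereal and \<epsilon> \<beta> \<delta> :: real
  assumes ws: "wave_sol m D r b d c \<phi> L"
    and m: "m > 1" and D: "D > 0" and c: "c > 0" and r: "r > 0"
    and bc: "continuous_on {0..} b" and dc: "continuous_on {0..} d" and b0: "b 0 = 0" and d0: "d 0 = 0"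
    and eps: "\<epsilon> > 0" and H1: "\<forall>s\<in>{0..\<epsilon>}. d s \<le> \<delta> * s" and H2: "\<forall>s\<in>{0..\<epsilon>}. \<beta> * s \<le> b s"
    and \<beta>\<delta>: "\<delta> < \<beta>" and \<beta>0: "0 \<le> \<beta>"
    and csmall: "(c*\<epsilon>*(1+\<beta>*r))^2 / (2*(\<beta>-\<delta>)*D) < (m/(m+1)) * \<epsilon> powr (m+1)"
  shows "(\<forall>t. ereal t < L \<longrightarrow> \<phi> t < \<epsilon>) \<and> L \<noteq> \<infinity>"
proof -
  note B = wave_sol_basic[OF ws]
  define k where "k = (\<lambda>s. d (\<phi> s) - b (\<phi> (s - c*r)))"
  define J where "J = (\<lambda>t. integral {0..t} k)"
  define I where "I = (\<lambda>t. integral {0..t} \<phi>)"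
  define U where "U = (\<lambda>s. \<phi> s powr m)"
  define w where "w = deriv U"
  define \<gamma> where "\<gamma> = \<beta> - \<delta>"
  define A where "A = c*\<epsilon>*(1+\<beta>*r)"
  have \<gamma>: "\<gamma> > 0" unfolding \<gamma>_def using \<beta>\<delta> by simp
  have cr: "c * r > 0" using c r by simp
  have A0: "A \<ge> 0" unfolding A_def using c eps \<beta>0 r by simp
  have kc: "continuous_on {t. ereal t < L} k"
    unfolding k_def by (rule kcont[OF bc dc _ _ B(5)]) (use c r B(4) in auto)
  have kz: "k s = 0" if "s \<le> 0" for s
  proof -
    have "s - c*r \<le> 0" using that cr by linarith
    then show ?thesis using that B(2) b0 d0 unfolding k_def by simp
  qed
  have Jd: "(J has_real_derivative k t) (at t)" if "ereal t < L" for t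
    unfolding J_def by (rule int_deriv_zero_left[OF kc kz that])
  have Id: "(I has_real_derivative \<phi> t) (at t)" if "ereal t < L" for t
    unfolding I_def by (rule int_deriv_zero_left[OF B(5) B(2) that])
  have Ud: "(U has_real_derivative w t) (at t)" if "ereal t < L" for t
  proof -
    have "U differentiable (at t)" using ws that unfolding wave_sol_def U_def by auto
    then show ?thesis unfolding w_def by (simp add: DERIV_deriv_iff_real_differentiable)
  qed
  have wid: "D * w t = c * \<phi> t + J t" if "ereal t < L" for t
    using wave_sol_identity[OF ws m D c r bc dc b0 d0 that] D unfolding w_def U_def J_def k_def
    by (simp add: field_simps)
  have Ineg: "I t = 0" if "t \<le> 0" for t
  proof (cases "t = 0")
    case True then show ?thesis unfolding I_def by simp
  next
    case False then show ?thesis using that unfolding I_def by simp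
  qed
  have Jneg: "J t = 0" if "t \<le> 0" for t
  proof (cases "t = 0")
    case True then show ?thesis unfolding J_def by simp
  next
    case False then show ?thesis using that unfolding J_def by simp
  qed
  have Lt: "ereal x < L" if "x \<le> t" "ereal t < L" for x t
    using that by (meson ereal_less_eq(3) le_less_trans)
  have Imono: "I a \<le> I b'" if "a \<le> b'" "ereal b' < L" for a b'
  proof (rule incr_by_deriv[OF that(1), of _ \<phi>])
    fix x assume "a \<le> x" "x \<le> b'" then show "(I has_real_derivative \<phi> x) (at x)" using Id Lt that(2) by blast
  next
    fix x assume "a < x" "x < b'" then show "0 \<le> \<phi> x" using B(4) Lt that(2) less_imp_le by blast
  qed
  have EST: "(\<forall>t\<in>{0..T}. J t \<le> \<delta> * I t - \<beta> * I (t - c*r)) \<and>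
             (\<forall>t\<in>{0..T}. D * w t \<le> A - \<gamma> * I t) \<and>
             (m/(m+1)) * \<phi> T powr (m+1) \<le> (A * I T - \<gamma> * (I T)^2 / 2) / D"
    if T: "0 \<le> T" "ereal T < L" and small: "\<forall>s\<in>{0..T}. \<phi> s \<le> \<epsilon>" for T
  proof -
    have TL: "ereal x < L" if "x \<le> T" for x using Lt[OF that T(2)] .
    have small': "\<phi> s \<in> {0..\<epsilon>}" if "s \<le> T" for s
    proof (cases "s \<le> 0")
      case True then show ?thesis using B(2) eps by simp
    next
      case False then show ?thesis using small that B(4)[OF TL[OF that]] by auto
    qed
    have i: "J t \<le> \<delta> * I t - \<beta> * I (t - c*r)" if t: "t \<in> {0..T}" for t
    proof -
      define H where "H = (\<lambda>t. J t - \<delta> * I t + \<beta> * I (t - c*r))"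
      have "H t \<le> H 0"
      proof (rule decr_by_deriv[of 0 t H "\<lambda>x. k x - \<delta> * \<phi> x + \<beta> * \<phi> (x - c*r)"])
        show "0 \<le> t" using t by simp
        show "(H has_real_derivative k x - \<delta> * \<phi> x + \<beta> * \<phi> (x - c * r)) (at x)"
          if "0 \<le> x" "x \<le> t" for x
        proof -
          have xL: "ereal x < L" "ereal (x - c*r) < L" using that t cr by (auto intro!: TL)
          have "((\<lambda>x. x - c*r) has_real_derivative 1) (at x)" by (auto intro!: derivative_eq_intros)
          from DERIV_chain2[OF Id[OF xL(2)] this]
          have dI2: "((\<lambda>x. I (x - c*r)) has_real_derivative \<phi> (x - c*r)) (at x)" by simp
          show ?thesis unfolding H_def
            by (intro DERIV_add DERIV_diff DERIV_cmult Jd[OF xL(1)] Id[OF xL(1)] dI2)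
        qed
        show "k x - \<delta> * \<phi> x + \<beta> * \<phi> (x - c * r) \<le> 0" if "0 < x" "x < t" for x
        proof -
          have "x \<le> T" "x - c*r \<le> T" using that t cr by auto
          then have "\<phi> x \<in> {0..\<epsilon>}" "\<phi> (x - c*r) \<in> {0..\<epsilon>}" using small' by blast+
          then have "d (\<phi> x) \<le> \<delta> * \<phi> x" "\<beta> * \<phi> (x - c*r) \<le> b (\<phi> (x - c*r))" using H1 H2 by auto
          then show ?thesis unfolding k_def by simp
        qed
      qed
      moreover have "H 0 = 0" unfolding H_def using Ineg Jneg cr by simp
      ultimately show ?thesis unfolding H_def by simp
    qed
    have ii0: "I t - I (t - c*r) \<le> c*r*\<epsilon>" if t: "t \<in> {0..T}" for t
    proof -
      have "\<And>x. t - c*r \<le> x \<Longrightarrow> x \<le> t \<Longrightarrow> (I has_real_derivative \<phi> x) (at x)"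
        using t by (auto intro!: Id TL)
      from MVT2[of "t - c*r" t, OF _ this] cr obtain \<xi> where xi: "t - c*r < \<xi>" "\<xi> < t"
        and eq: "I t - I (t - c*r) = (t - (t - c*r)) * \<phi> \<xi>" by auto
      have "\<phi> \<xi> \<le> \<epsilon>" using small'[of \<xi>] xi t by auto
      then show ?thesis using eq cr by (simp add: mult_left_mono)
    qed
    have ii: "D * w t \<le> A - \<gamma> * I t" if t: "t \<in> {0..T}" for t
    proof -
      have "D * w t = c * \<phi> t + J t" using wid TL t by auto
      also have "\<dots> \<le> c * \<epsilon> + (\<delta> * I t - \<beta> * I (t - c*r))"
        using i[OF t] small'[of t] t c by (auto intro!: add_mono mult_left_mono)
      also have "\<dots> \<le> c * \<epsilon> + (\<delta> * I t - \<beta> * (I t - c*r*\<epsilon>))"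
      proof -
        have "\<beta> * (I t - c*r*\<epsilon>) \<le> \<beta> * I (t - c*r)" using ii0[OF t] \<beta>0 by (intro mult_left_mono) auto
        then show ?thesis by linarith
      qed
      also have "\<dots> = A - \<gamma> * I t" unfolding A_def \<gamma>_def by (simp add: algebra_simps)
      finally show ?thesis .
    qed
    have iii: "(m/(m+1)) * (\<phi> T * U T) \<le> (A * I T - \<gamma> * (I T)^2 / 2) / D"
    proof -
      define \<mu> where "\<mu> = m/(m+1)"
      define \<nu> where "\<nu> = 1/D"
      define E where "E = (\<lambda>t. \<mu> * (\<phi> t * U t) - \<nu> * (A * I t - \<gamma> * (I t * I t) / 2))"
      have Ec: "continuous_on {0..T} E"
      proof -
        have "continuous_on {0..T} \<phi>" using B(5) by (rule continuous_on_subset) (use TL in auto)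
        moreover have "continuous_on {0..T} U"
          using Ud TL by (meson DERIV_continuous atLeastAtMost_iff continuous_at_imp_continuous_on)
        moreover have "continuous_on {0..T} I"
          using Id TL by (meson DERIV_continuous atLeastAtMost_iff continuous_at_imp_continuous_on)
        ultimately show ?thesis unfolding E_def using D by (intro continuous_intros) auto
      qed
      have Ed: "\<exists>y. DERIV E x :> y \<and> y \<le> 0" if x: "0 < x" "x < T" for x
      proof -
        have xL: "ereal x < L" using x by (auto intro!: TL)
        have px: "\<phi> x > 0" using B(3)[OF x(1) xL] .
        have "\<phi> differentiable (at x)" using ws x xL unfolding wave_sol_def by auto
        then have dphi: "(\<phi> has_real_derivative deriv \<phi> x) (at x)"
          by (simp add: DERIV_deriv_iff_real_differentiable)
        define p' where "p' = deriv \<phi> x"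
        have dU2: "(U has_real_derivative m * \<phi> x powr (m - 1) * p') (at x)"
          unfolding U_def p'_def using DERIV_fun_powr[OF dphi px, of m] by simp
        have wx: "w x = m * \<phi> x powr (m - 1) * p'" using DERIV_unique[OF Ud[OF xL] dU2] .
        have Ux: "U x = \<phi> x powr (m - 1) * \<phi> x" unfolding U_def using px
          by (simp add: powr_diff field_simps)
        define E' where "E' = \<mu> * (p' * U x + w x * \<phi> x) - \<nu> * (A * \<phi> x - \<gamma> * (\<phi> x * I x + \<phi> x * I x) / 2)"
        have "DERIV E x :> E'" unfolding E_def E'_def
          using dphi[folded p'_def] Ud[OF xL] Id[OF xL]
          by (auto intro!: derivative_eq_intros simp: algebra_simps)
        moreover have "E' = \<phi> x * (w x - (A - \<gamma> * I x) / D)"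
        proof -
          have "p' * U x = \<phi> x * w x / m" unfolding Ux wx using m by (simp add: field_simps)
          then have "(m/(m+1)) * (p' * U x + \<phi> x * w x) = \<phi> x * w x" using m by (simp add: field_simps)
          then show ?thesis unfolding E'_def \<mu>_def[symmetric] \<nu>_def using D by (simp add: field_simps)
        qed
        moreover have "w x - (A - \<gamma> * I x) / D \<le> 0" using ii[of x] x D by (simp add: field_simps)
        ultimately show ?thesis using px by (intro exI[of _ E']) (simp add: mult_nonneg_nonpos less_imp_le)
      qed
      have "E T \<le> E 0" by (rule DERIV_nonpos_imp_decreasing_open[OF T(1) Ed Ec]) auto
      moreover have "E 0 = 0" unfolding E_def U_def using B(2)[of 0] Ineg[of 0] by simp
      ultimately have "E T \<le> 0" by simp
      then have "\<mu> * (\<phi> T * U T) \<le> \<nu> * (A * I T - \<gamma> * (I T * I T) / 2)" unfolding E_def by simp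
      then show ?thesis unfolding \<mu>_def \<nu>_def by (simp add: power2_eq_square)
    qed
    have "\<phi> T * U T = \<phi> T powr (m+1)"
    proof (cases "\<phi> T = 0")
      case True then show ?thesis unfolding U_def using m by simp
    next
      case False
      then have "\<phi> T > 0" using B(4)[OF T(2)] by simp
      then show ?thesis unfolding U_def by (simp add: powr_add)
    qed
    then show ?thesis using i ii iii by simp
  qed
  have quad: "(A * I T - \<gamma> * (I T)^2 / 2) / D \<le> A^2 / (2*\<gamma>*D)" for T
  proof -
    have "(A * I T - \<gamma> * (I T)^2 / 2) / D \<le> (A^2 / (2 * \<gamma>)) / D"
      by (rule divide_right_mono[OF quad_bound[OF \<gamma>]]) (use D in simp)
    then show ?thesis by (simp add: mult.commute)
  qed
  have Q: "A^2 / (2*\<gamma>*D) < (m/(m+1)) * \<epsilon> powr (m+1)"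
    using csmall unfolding A_def \<gamma>_def by (simp add: mult_ac)
  have below: "\<phi> t < \<epsilon>" if t: "ereal t < L" for t
  proof (rule ccontr)
    assume "\<not> \<phi> t < \<epsilon>"
    then have pt: "\<phi> t \<ge> \<epsilon>" by simp
    have t0: "t > 0" using pt eps B(2)[of t] by (cases "t \<le> 0") auto
    have ct: "continuous_on {0..t} \<phi>" using B(5) by (rule continuous_on_subset) (use t Lt in auto)
    define S where "S = {x \<in> {0..t}. \<phi> x = \<epsilon>}"
    have Sne: "S \<noteq> {}" unfolding S_def using IVT'[of \<phi> 0 \<epsilon> t, OF _ pt _ ct] B(2)[of 0] eps t0 by auto
    have Sc: "compact S"
    proof -
      have "closed S" unfolding S_def by (rule continuous_closed_preimage_constant[OF ct]) simp
      moreover have "bounded S" unfolding S_def by (rule bounded_subset[of "{0..t}"]) auto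
      ultimately show ?thesis by (simp add: compact_eq_bounded_closed)
    qed
    obtain ts where ts: "ts \<in> S" and tmin: "\<forall>y\<in>S. ts \<le> y" using compact_attains_inf[OF Sc Sne] by blast
    have tsr: "0 \<le> ts" "ts \<le> t" "\<phi> ts = \<epsilon>" using ts unfolding S_def by auto
    have tsL: "ereal ts < L" using Lt[OF tsr(2) t] .
    have sm: "\<forall>s\<in>{0..ts}. \<phi> s \<le> \<epsilon>"
    proof (rule ccontr)
      assume "\<not> (\<forall>s\<in>{0..ts}. \<phi> s \<le> \<epsilon>)"
      then obtain s where s: "s \<in> {0..ts}" "\<phi> s > \<epsilon>" by force
      have cs: "continuous_on {0..s} \<phi>" using ct by (rule continuous_on_subset) (use s tsr in auto)
      obtain x where x: "0 \<le> x" "x \<le> s" "\<phi> x = \<epsilon>"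
        using IVT'[of \<phi> 0 \<epsilon> s, OF _ _ _ cs] B(2)[of 0] eps s by auto
      have "x \<in> S" unfolding S_def using x s tsr by auto
      moreover have "x < ts"
      proof -
        have "s \<noteq> ts" using s tsr by auto
        then have "s < ts" using s by auto
        then show ?thesis using x by linarith
      qed
      ultimately show False using tmin by force
    qed
    have "(m/(m+1)) * \<epsilon> powr (m+1) \<le> (A * I ts - \<gamma> * (I ts)^2 / 2) / D"
      using EST[OF tsr(1) tsL sm] tsr(3) by simp
    also have "\<dots> \<le> A^2 / (2*\<gamma>*D)" by (rule quad)
    finally show False using Q by simp
  qed
  have notinf: "L \<noteq> \<infinity>"
  proof
    assume Linf: "L = \<infinity>"
    have allL: "ereal t < L" for t using Linf by simp
    have smallall: "\<forall>s\<in>{0..T}. \<phi> s \<le> \<epsilon>" for T using below allL by (auto intro: less_imp_le)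
    note E = EST[OF _ allL smallall]
    have Inn: "I t \<ge> 0" for t using Imono[of 0 t] Ineg[of 0] Ineg[of t] allL by (cases "t \<le> 0") auto
    have Ib: "I t \<le> 2 * A / \<gamma>" for t
    proof (cases "t \<le> 0")
      case True then show ?thesis using Ineg[OF True] A0 \<gamma> by simp
    next
      case False
      have "0 \<le> (m/(m+1)) * \<phi> t powr (m+1)" using m by simp
      also have "\<dots> \<le> (A * I t - \<gamma> * (I t)^2 / 2) / D" using E[of t] False by simp
      finally have "0 \<le> A * I t - \<gamma> * (I t)^2 / 2" using D by (simp add: divide_nonneg_pos zero_le_divide_iff)
      then have "0 \<le> I t * (A - \<gamma> * I t / 2)" by (simp add: algebra_simps power2_eq_square)
      then have "I t = 0 \<or> A - \<gamma> * I t / 2 \<ge> 0" using Inn[of t] by (simp add: zero_le_mult_iff) linarith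
      then show ?thesis using A0 \<gamma> by (auto simp: field_simps)
    qed
    have I1: "I 1 > 0"
    proof -
      have "\<And>x. 0 \<le> x \<Longrightarrow> x \<le> 1 \<Longrightarrow> (I has_real_derivative \<phi> x) (at x)" using Id allL by auto
      from MVT2[of 0 1, OF _ this] obtain \<xi> where xi: "0 < \<xi>" "\<xi> < 1" and eq: "I 1 - I 0 = (1 - 0) * \<phi> \<xi>"
        by auto
      then show ?thesis using B(3)[OF xi(1) allL] Ineg[of 0] by simp
    qed
    define Is where "Is = Sup (I ` {0..})"
    have bdd: "bdd_above (I ` {0..})" using Ib by (auto intro!: bdd_aboveI)
    have Ile: "I t \<le> Is" if "t \<ge> 0" for t unfolding Is_def using bdd that by (auto intro!: cSup_upper)
    define \<eta> where "\<eta> = \<gamma> * I 1 / (2 * (\<beta> + 1))"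
    have \<eta>: "\<eta> > 0" unfolding \<eta>_def using \<gamma> I1 \<beta>0 by simp
    have "Is - \<eta> < Is" using \<eta> by simp
    then obtain s where s: "s \<in> {0..}" "Is - \<eta> < I s"
      unfolding Is_def using less_cSup_iff[of "I ` {0..}" "Is - \<eta>", OF _ bdd] by (auto simp: Is_def)
    define T where "T = max s 1 + c*r"
    define \<kappa> where "\<kappa> = \<gamma> * I 1 / 2"
    have \<kappa>: "\<kappa> > 0" unfolding \<kappa>_def using \<gamma> I1 by simp
    define Z where "Z = (\<lambda>t. D * U t - c * I t)"
    have Zd: "(Z has_real_derivative J t) (at t)" for t
    proof -
      have "(Z has_real_derivative D * w t - c * \<phi> t) (at t)" unfolding Z_def
        using Ud[OF allL] Id[OF allL] by (auto intro!: derivative_eq_intros)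
      then show ?thesis using wid[OF allL] by simp
    qed
    have Jb: "J t \<le> - \<kappa>" if t: "t \<ge> T" for t
    proof -
      have t0: "t \<ge> 0" "t \<ge> 1" "t - c*r \<ge> s" using t cr s unfolding T_def by auto
      have "J t \<le> \<delta> * I t - \<beta> * I (t - c*r)" using E[of t] t0 by auto
      also have "\<dots> = - \<gamma> * I t + \<beta> * (I t - I (t - c*r))" unfolding \<gamma>_def by (simp add: algebra_simps)
      also have "\<dots> \<le> - \<gamma> * I 1 + \<beta> * \<eta>"
      proof (rule add_mono)
        show "- \<gamma> * I t \<le> - \<gamma> * I 1" using Imono[OF t0(2) allL] \<gamma> by simp
        have "I (t - c*r) \<ge> I s" using Imono[OF t0(3) allL] .
        moreover have "I t \<le> Is" using Ile t0 by simp
        ultimately have "I t - I (t - c*r) \<le> \<eta>" using s by simp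
        then show "\<beta> * (I t - I (t - c*r)) \<le> \<beta> * \<eta>" using \<beta>0 by (rule mult_left_mono)
      qed
      also have "\<dots> \<le> - \<kappa>"
      proof -
        have "\<beta> * \<eta> = \<gamma> * I 1 / 2 * (2 * \<beta> / (2 * (\<beta> + 1)))" unfolding \<eta>_def by (simp add: field_simps)
        also have "\<dots> \<le> \<gamma> * I 1 / 2 * 1" using \<gamma> I1 \<beta>0 by (intro mult_left_mono) (auto simp: field_simps)
        finally show ?thesis unfolding \<kappa>_def by simp
      qed
      finally show ?thesis .
    qed
    define X where "X = \<bar>Z T + c * Is\<bar> / \<kappa> + 1"
    have X: "X > 0" unfolding X_def using \<kappa> by (simp add: add_nonneg_pos)
    have "Z (T + X) \<le> Z T - \<kappa> * X"
    proof -
      have "(\<lambda>t. Z t + \<kappa> * t) (T + X) \<le> (\<lambda>t. Z t + \<kappa> * t) T"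
      proof (rule decr_by_deriv[of T "T + X" _ "\<lambda>t. J t + \<kappa>"])
        show "T \<le> T + X" using X by simp
        show "((\<lambda>t. Z t + \<kappa> * t) has_real_derivative J x + \<kappa>) (at x)" for x
          by (auto intro!: derivative_eq_intros Zd)
        show "J x + \<kappa> \<le> 0" if "T < x" "x < T + X" for x using Jb[of x] that by simp
      qed
      then show ?thesis by (simp add: algebra_simps)
    qed
    moreover have "Z (T + X) \<ge> - c * Is"
    proof -
      have "U (T+X) \<ge> 0" unfolding U_def by simp
      moreover have "T + X \<ge> 0" using X cr unfolding T_def by simp
      then have "I (T+X) \<le> Is" by (rule Ile)
      ultimately have "D * U (T+X) \<ge> 0" "c * I (T+X) \<le> c * Is"
        using D c by (auto intro: mult_left_mono)
      then show ?thesis unfolding Z_def by linarith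
    qed
    moreover have "\<kappa> * X > Z T + c * Is"
    proof -
      have "\<kappa> * X = \<bar>Z T + c * Is\<bar> + \<kappa>" unfolding X_def using \<kappa> by (simp add: field_simps)
      then show ?thesis using \<kappa> by linarith
    qed
    ultimately show False by linarith
  qed
  show ?thesis using below notinf by auto
qed



lemma mvt0:
  fixes f f' :: "real \<Rightarrow> real"
  assumes dd: "\<forall>s\<ge>0. (f has_real_derivative f' s) (at s within {0..})" and fc: "continuous_on {0..} f"
    and s: "s > 0"
  shows "\<exists>z. 0 < z \<and> z < s \<and> f s - f 0 = s * f' z"
proof -
  have "\<exists>l z. 0 < z \<and> z < s \<and> DERIV f z :> l \<and> f s - f 0 = (s - 0) * l"
    by (rule MVT[OF s continuous_on_subset[OF fc]])
       (auto intro: deriv_at_pos[OF dd] simp: real_differentiable_def)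
  then obtain l z where z: "0 < z" "z < s" "DERIV f z :> l" "f s - f 0 = s * l" by auto
  have "l = f' z" using DERIV_unique[OF z(3) deriv_at_pos[OF dd z(1)]] .
  then show ?thesis using z by auto
qed

lemma cont_from_deriv:
  assumes "\<forall>s\<ge>0. (f has_real_derivative f' s) (at s within {0..})"
  shows "continuous_on {0..} f"
  using assms by (auto simp: continuous_on_eq_continuous_within intro: DERIV_continuous)

lemma near0:
  fixes f :: "real \<Rightarrow> real"
  assumes "continuous_on {0..} f" "e > 0"
  shows "\<exists>\<epsilon>>0. \<forall>s. 0 \<le> s \<and> s < \<epsilon> \<longrightarrow> \<bar>f s - f 0\<bar> < e"
proof -
  have z: "(0::real) \<in> {0..}" by simp
  from assms(1)[unfolded continuous_on_iff, rule_format, OF z assms(2)]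
  obtain d where "d > 0" "\<forall>x'\<in>{0..}. dist x' 0 < d \<longrightarrow> dist (f x') (f 0) < e" by blast
  then show ?thesis by (intro exI[of _ d]) (auto simp: dist_real_def)
qed

theorem lemma5p2:
  fixes m D r \<kappa> sM :: real and b d b' d' d'' :: "real \<Rightarrow> real"
  assumes m: "m > 1" and D: "D > 0" and r: "r > 0"
    and d_C2: "\<forall>s\<ge>0. (d has_real_derivative d' s) (at s within {0..})
                    \<and> (d' has_real_derivative d'' s) (at s within {0..})"
    and d''_cont: "continuous_on {0..} d''"
    and d0: "d 0 = 0"
    and d'_pos: "\<forall>s>0. d' s > 0"
    and d''_nonneg: "\<forall>s>0. d'' s \<ge> 0"
    and b_C1: "\<forall>s\<ge>0. (b has_real_derivative b' s) (at s within {0..})"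
    and b'_cont: "continuous_on {0..} b'"
    and b_nonneg: "\<forall>s\<ge>0. b s \<ge> 0"
    and sM_pos: "sM > 0"
    and sM_max: "\<forall>s\<ge>0. b s \<le> b sM"
    and sM_unique: "\<forall>s>0. local_extremum_at b s \<longleftrightarrow> s = sM"
    and b0: "b 0 = 0"
    and kappa_pos: "\<kappa> > 0"
    and b_kappa: "b \<kappa> = d \<kappa>"
    and b'0: "b' 0 > d' 0"
    and b'kappa: "b' \<kappa> < d' \<kappa>"
    and between: "\<forall>s. 0 < s \<and> s < \<kappa> \<longrightarrow> d s < b s \<and> b s \<le> b' 0 * s"
    and sM_kappa: "sM < \<kappa>"
  shows "\<exists>c0>0. \<forall>c. 0 < c \<and> c \<le> c0 \<longrightarrow>
           (\<forall>\<phi> L. wave_profile m D r b d c \<phi> L \<longrightarrow>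
              (\<exists>T>0. L = ereal T \<and> (\<forall>t. 0 < t \<and> t < T \<longrightarrow> \<phi> t > 0)
                     \<and> (\<phi> \<longlongrightarrow> 0) (at_left T)))"
proof -
  have dd: "\<forall>s\<ge>0. (d has_real_derivative d' s) (at s within {0..})" using d_C2 by auto
  have dd': "\<forall>s\<ge>0. (d' has_real_derivative d'' s) (at s within {0..})" using d_C2 by auto
  have dc: "continuous_on {0..} d" by (rule cont_from_deriv[OF dd])
  have d'c: "continuous_on {0..} d'" by (rule cont_from_deriv[OF dd'])
  have bc: "continuous_on {0..} b" by (rule cont_from_deriv[OF b_C1])
  have bB: "\<forall>s\<ge>0. \<bar>b s\<bar> \<le> b sM" using b_nonneg sM_max by auto
  have dnn: "d s \<ge> 0" if "s \<ge> 0" for s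
  proof (cases "s = 0")
    case True then show ?thesis using d0 by simp
  next
    case False
    then have "s > 0" using that by simp
    from mvt0[OF dd dc this] obtain z where "0 < z" "z < s" "d s - d 0 = s * d' z" by blast
    then show ?thesis using d'_pos d0 \<open>s > 0\<close> by (simp add: less_imp_le)
  qed
  have d'0: "d' 0 \<ge> 0"
  proof (rule ccontr)
    assume "\<not> d' 0 \<ge> 0"
    then have neg: "d' 0 < 0" by simp
    obtain e where e: "e > 0" "\<forall>s. 0 \<le> s \<and> s < e \<longrightarrow> \<bar>d' s - d' 0\<bar> < - d' 0"
      using near0[OF d'c, of "- d' 0"] neg by auto
    have "\<bar>d' (e/2) - d' 0\<bar> < - d' 0" using e by auto
    moreover have "d' (e/2) > 0" using d'_pos e by auto
    ultimately show False by linarith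
  qed
  define g where "g = b' 0 - d' 0"
  have g: "g > 0" unfolding g_def using b'0 by simp
  define \<delta> where "\<delta> = d' 0 + g/4"
  define \<beta> where "\<beta> = b' 0 - g/4"
  have \<beta>\<delta>: "\<delta> < \<beta>" using g g_def unfolding \<delta>_def \<beta>_def by linarith
  have \<beta>0: "0 \<le> \<beta>" unfolding \<beta>_def g_def using d'0 b'0 by simp
  obtain e1 where e1: "e1 > 0" "\<forall>s. 0 \<le> s \<and> s < e1 \<longrightarrow> \<bar>b' s - b' 0\<bar> < g/4"
    using near0[OF b'_cont, of "g/4"] g by auto
  obtain e2 where e2: "e2 > 0" "\<forall>s. 0 \<le> s \<and> s < e2 \<longrightarrow> \<bar>d' s - d' 0\<bar> < g/4"
    using near0[OF d'c, of "g/4"] g by auto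
  define \<epsilon> where "\<epsilon> = min e1 e2 / 2"
  have eps: "\<epsilon> > 0" "\<epsilon> < e1" "\<epsilon> < e2" unfolding \<epsilon>_def using e1 e2 by auto
  have H1: "\<forall>s\<in>{0..\<epsilon>}. d s \<le> \<delta> * s"
  proof
    fix s assume s: "s \<in> {0..\<epsilon>}"
    show "d s \<le> \<delta> * s"
    proof (cases "s = 0")
      case True then show ?thesis using d0 by simp
    next
      case False
      then have sp: "s > 0" using s by simp
      from mvt0[OF dd dc sp] obtain z where z: "0 < z" "z < s" "d s - d 0 = s * d' z" by blast
      have "\<bar>d' z - d' 0\<bar> < g/4" using e2(2)[rule_format, of z] z s eps by auto
      then have "d' z < \<delta>" unfolding \<delta>_def abs_less_iff by linarith
      then have "s * d' z \<le> s * \<delta>" using sp by (intro mult_left_mono) auto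
      then show ?thesis using z d0 by (simp add: mult.commute)
    qed
  qed
  have H2: "\<forall>s\<in>{0..\<epsilon>}. \<beta> * s \<le> b s"
  proof
    fix s assume s: "s \<in> {0..\<epsilon>}"
    show "\<beta> * s \<le> b s"
    proof (cases "s = 0")
      case True then show ?thesis using b0 by simp
    next
      case False
      then have sp: "s > 0" using s by simp
      from mvt0[OF b_C1 bc sp] obtain z where z: "0 < z" "z < s" "b s - b 0 = s * b' z" by blast
      have "\<bar>b' z - b' 0\<bar> < g/4" using e1(2)[rule_format, of z] z s eps by auto
      then have "b' z > \<beta>" unfolding \<beta>_def abs_less_iff by linarith
      then have "s * \<beta> \<le> s * b' z" using sp by (intro mult_left_mono) auto
      then show ?thesis using z b0 by (simp add: mult.commute)
    qed
  qed
  define Q where "Q = (m/(m+1)) * \<epsilon> powr (m+1)"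
  have Q: "Q > 0" unfolding Q_def using m eps by simp
  define \<gamma> where "\<gamma> = \<beta> - \<delta>"
  have \<gamma>: "\<gamma> > 0" unfolding \<gamma>_def using \<beta>\<delta> by simp
  define c0 where "c0 = sqrt (Q * \<gamma> * D) / (\<epsilon> * (1 + \<beta> * r))"
  have den: "\<epsilon> * (1 + \<beta> * r) > 0" using eps \<beta>0 r by (simp add: add_pos_nonneg)
  have c0: "c0 > 0" unfolding c0_def using Q \<gamma> D den by simp
  show ?thesis
  proof (rule exI[of _ c0], intro conjI c0 allI impI)
    fix c \<phi> L
    assume c: "0 < c \<and> c \<le> c0" and wp: "wave_profile m D r b d c \<phi> L"
    have ws: "wave_sol m D r b d c \<phi> L" using wp unfolding wave_profile_def by simp
    have max: "\<And>\<psi> L'. wave_sol m D r b d c \<psi> L' \<Longrightarrow> L \<le> L' \<Longrightarrow> (\<forall>t. ereal t < L \<longrightarrow> \<psi> t = \<phi> t) \<Longrightarrow> L' = L"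
      using wp unfolding wave_profile_def by blast
    have cpos: "c > 0" using c by simp
    have csmall: "(c*\<epsilon>*(1+\<beta>*r))^2 / (2*(\<beta>-\<delta>)*D) < (m/(m+1)) * \<epsilon> powr (m+1)"
    proof -
      have "c * (\<epsilon> * (1 + \<beta> * r)) \<le> c0 * (\<epsilon> * (1 + \<beta> * r))" using c den by (intro mult_right_mono) auto
      also have "\<dots> = sqrt (Q * \<gamma> * D)" unfolding c0_def
        using den by (metis less_irrefl nonzero_eq_divide_eq)
      finally have "c*\<epsilon>*(1+\<beta>*r) \<le> sqrt (Q * \<gamma> * D)" by (simp add: mult_ac)
      moreover have "c*\<epsilon>*(1+\<beta>*r) \<ge> 0" using cpos den by (simp add: mult.assoc)
      ultimately have "(c*\<epsilon>*(1+\<beta>*r))^2 \<le> (sqrt (Q * \<gamma> * D))^2" by (intro power_mono) auto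
      also have "\<dots> = Q * \<gamma> * D" using Q \<gamma> D by simp
      finally have "(c*\<epsilon>*(1+\<beta>*r))^2 / (2*\<gamma>*D) \<le> (Q * \<gamma> * D) / (2*\<gamma>*D)"
        using \<gamma> D by (intro divide_right_mono) auto
      also have "\<dots> = Q / 2" using \<gamma> D by simp
      also have "\<dots> < Q" using Q by simp
      finally show ?thesis unfolding Q_def \<gamma>_def .
    qed
    have AP: "(\<forall>t. ereal t < L \<longrightarrow> \<phi> t < \<epsilon>) \<and> L \<noteq> \<infinity>"
      by (rule apriori[OF ws m D cpos r bc dc b0 d0 eps(1) H1 H2 \<beta>\<delta> \<beta>0 csmall])
    note B = wave_sol_basic[OF ws]
    obtain T0 where T0: "L = ereal T0" using AP B(1) by (cases L) auto
    have T0p: "T0 > 0" using B(1) T0 by (simp add: zero_ereal_def)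
    have below: "\<phi> t < \<epsilon>" if "t < T0" for t using AP T0 that by auto
    define k where "k = (\<lambda>s. d (\<phi> s) - b (\<phi> (s - c*r)))"
    define U where "U = (\<lambda>s. \<phi> s powr m)"
    define w where "w = deriv U"
    define Kk where "Kk = \<bar>\<delta>\<bar> * \<epsilon> + b sM"
    define M where "M = (c * \<epsilon> + Kk * T0) / D"
    have Kk: "Kk \<ge> 0"
    proof -
      have "b sM \<ge> 0" using b_nonneg sM_pos by auto
      moreover have "\<bar>\<delta>\<bar> * \<epsilon> \<ge> 0" using eps by simp
      ultimately show ?thesis unfolding Kk_def by linarith
    qed
    have M0: "M \<ge> 0" unfolding M_def using cpos eps Kk T0p D by simp
    have cr: "c * r > 0" using cpos r by simp
    have Ud: "(U has_real_derivative w t) (at t)" if "t < T0" for t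
    proof -
      have "U differentiable (at t)" using ws that T0 unfolding wave_sol_def U_def by auto
      then show ?thesis unfolding w_def by (simp add: DERIV_deriv_iff_real_differentiable)
    qed
    have kb: "\<bar>k s\<bar> \<le> Kk" if "s < T0" for s
    proof -
      have ps: "\<phi> s \<in> {0..\<epsilon>}" using B(4)[of s] below[OF that] that T0 by auto
      have ps2: "\<phi> (s - c*r) \<ge> 0" using B(4)[of "s - c*r"] that T0 cr by auto
      have "0 \<le> d (\<phi> s)" "d (\<phi> s) \<le> \<bar>\<delta>\<bar> * \<epsilon>"
        using dnn ps H1 by (auto intro: order_trans[OF _ mult_mono[of \<delta> "\<bar>\<delta>\<bar>" "\<phi> s" \<epsilon>]])
      moreover have "0 \<le> b (\<phi> (s - c*r))" "b (\<phi> (s - c*r)) \<le> b sM" using b_nonneg sM_max ps2 by auto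
      ultimately show ?thesis unfolding k_def Kk_def by linarith
    qed
    have wb: "\<bar>w t\<bar> \<le> M" if t: "t < T0" for t
    proof -
      have tL: "ereal t < L" using t T0 by simp
      have wi: "w t = (c * \<phi> t + integral {0..t} k) / D"
        using wave_sol_identity[OF ws m D cpos r bc dc b0 d0 tL] unfolding w_def U_def k_def .
      have Jb: "\<bar>integral {0..t} k\<bar> \<le> Kk * T0"
      proof (cases "t \<le> 0")
        case True
        then have "integral {0..t} k = 0" by (cases "t = 0") auto
        then show ?thesis using Kk T0p by simp
      next
        case False
        have kc: "continuous_on {t. ereal t < L} k"
          unfolding k_def by (rule kcont[OF bc dc _ _ B(5)]) (use cr B(4) in auto)
        have "\<bar>integral {0..t} k\<bar> \<le> Kk * (t - 0)"
          by (rule int_abs_bound) (use False kb t T0 in \<open>auto intro: continuous_on_subset[OF kc]\<close>)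
        also have "\<dots> \<le> Kk * T0" using t Kk by (intro mult_left_mono) auto
        finally show ?thesis .
      qed
      have "\<bar>c * \<phi> t\<bar> \<le> c * \<epsilon>" using B(4)[OF tL] below[OF t] cpos by (simp add: abs_mult less_imp_le)
      then have "\<bar>c * \<phi> t + integral {0..t} k\<bar> \<le> c * \<epsilon> + Kk * T0" using Jb by linarith
      then show ?thesis unfolding wi M_def using D by (simp add: divide_right_mono)
    qed
    define f where "f = (\<lambda>t. U t + M * t)"
    have fmono: "f a \<le> f b'" if "a \<le> b'" "b' < T0" for a b'
    proof (rule incr_by_deriv[OF that(1), of f "\<lambda>t. w t + M"])
      fix x assume "a \<le> x" "x \<le> b'"
      then show "(f has_real_derivative w x + M) (at x)" unfolding f_def using that Ud[of x]
        by (auto intro!: derivative_eq_intros)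
    next
      fix x assume "a < x" "x < b'"
      then show "0 \<le> w x + M" using wb[of x] that by auto
    qed
    have fbd: "f b' \<le> \<epsilon> powr m + M * T0" if "b' < T0" for b'
    proof -
      have "\<phi> b' \<ge> 0" "\<phi> b' \<le> \<epsilon>" using B(4)[of b'] below[OF that] that T0 by auto
      then have "U b' \<le> \<epsilon> powr m" unfolding U_def using m by (intro powr_mono2) auto
      moreover have "M * b' \<le> M * T0" using M0 that by (intro mult_left_mono) auto
      ultimately show ?thesis unfolding f_def by simp
    qed
    have "(f \<longlongrightarrow> Sup (f ` ({..<T0} \<inter> UNIV))) (at T0 within ({..<T0} \<inter> UNIV))"
      by (rule Lim_left_bound[where K = "\<epsilon> powr m + M * T0"]) (use fmono fbd in auto)
    then have fl: "(f \<longlongrightarrow> Sup (f ` {..<T0})) (at_left T0)" by simp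
    define lv where "lv = Sup (f ` {..<T0}) - M * T0"
    have Ul: "(U \<longlongrightarrow> lv) (at_left T0)"
    proof -
      have "((\<lambda>t. f t - M * t) \<longlongrightarrow> Sup (f ` {..<T0}) - M * T0) (at_left T0)"
        by (intro tendsto_intros fl)
      then show ?thesis unfolding lv_def f_def by simp
    qed
    have ev: "eventually (\<lambda>t. t < T0) (at_left T0)" by (simp add: eventually_at_filter)
    have lv0: "lv \<ge> 0"
      by (rule tendsto_lowerbound[OF Ul]) (auto simp: U_def)
    have \<phi>U: "eventually (\<lambda>t. U t powr (1/m) = \<phi> t) (at_left T0)"
      using ev by (rule eventually_mono) (use B(4) T0 m in \<open>auto simp: U_def powr_powr\<close>)
    have \<phi>l: "(\<phi> \<longlongrightarrow> lv powr (1/m)) (at_left T0)"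
    proof -
      have "((\<lambda>t. U t powr (1/m)) \<longlongrightarrow> lv powr (1/m)) (at_left T0)"
        by (rule tendsto_powr'[OF Ul tendsto_const]) (use m in \<open>auto simp: U_def\<close>)
      then show ?thesis using \<phi>U tendsto_cong by fast
    qed
    show "\<exists>T>0. L = ereal T \<and> (\<forall>t. 0 < t \<and> t < T \<longrightarrow> \<phi> t > 0) \<and> (\<phi> \<longlongrightarrow> 0) (at_left T)"
    proof (cases "lv = 0")
      case True
      then show ?thesis using \<phi>l T0 T0p B(3) by (intro exI[of _ T0]) auto
    next
      case False
      then have pp: "lv powr (1/m) > 0" using lv0 by simp
      obtain \<psi> L' where ext: "wave_sol m D r b d c \<psi> L'" "ereal T0 < L'" "\<forall>t. t < T0 \<longrightarrow> \<psi> t = \<phi> t"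
        using extension[OF ws[unfolded T0] m D cpos r bc dc b0 d0 dd d'c bB \<phi>l pp] by blast
      have "L' = L" by (rule max[OF ext(1)]) (use ext T0 in auto)
      then show ?thesis using ext(2) T0 by simp
    qed
  qed
qed


end
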